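(* The ring $R(T^l)[x_1,\ldots,x_n]/\mathcal I_\lambda$ is generated as an $R(T^l)$-module by $\binom{n}{\lambda}=\frac{n!}{\lambda_1!\cdots\lambda_l!}$ elements, where $\mathcal I_\lambda$ is the ideal generated by \[\sum_{0\le k\le d}(-1)^{d-k}\,e_k(x_{i_1},\ldots,x_{i_s})\,h_{d-k}\big(u_{\phi_\lambda(1)},\ldots,u_{\phi_\lambda(s+1-d)}\big)\] for all $1\le s\le n$, $1\le i_1<\cdots<i_s\le n$, and integers $d\ge s+1-p_{\lambda^\vee}(s)$.
   Context: Fix $n\ge1$ and a partition $\lambda=(\lambda_1\ge\cdots\ge\lambda_l>0)$ of $n$; set $\lambda_j=0$ for $j>l$. $R(T^l)=\mathbb Z[u_1^{\pm1},\ldots,u_l^{\pm1}]$ (Laurent polynomial ring). $\lambda^\vee=(\eta_1,\ldots,\eta_n)$ with $\eta_j=\#\{i:\lambda_i\ge j\}$, and $p_{\lambda^\vee}(s)=\eta_{n-s+1}+\cdots+\eta_n$. $\phi_\lambda:[n]\to[l]$ is such that $(\phi_\lambda(1),\ldots,\phi_\lambda(n))$ is the concatenation, for $r=1,\ldots,l$, of $(1,2,\ldots,r)$ repeated $\lambda_r-\lambda_{r+1}$ times. $e_k$, $h_m$ are elementary and complete homogeneous symmetric polynomials, $e_0=h_0=1$, and $h_m$ of an empty list is $0$ for $m>0$. *)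

theory Defs
  imports Main "HOL-Library.Poly_Mapping" "HOL-Library.FuncSet"
begin

text \<open>Laurent polynomials over the integers in variables u_i (i : nat), represented as the
group ring of the free abelian group of exponent vectors nat =>0 int.  R(T^l) is the subring
of those using only u_1,...,u_l.\<close>
type_synonym laur = "(nat \<Rightarrow>\<^sub>0 int) \<Rightarrow>\<^sub>0 int"

type_synonym mpoly = "(nat \<Rightarrow>\<^sub>0 nat) \<Rightarrow>\<^sub>0 laur"

definition RT :: "nat \<Rightarrow> laur set" where
  "RT l = {r::laur. \<forall>a\<in>Poly_Mapping.keys r. Poly_Mapping.keys a \<subseteq> {1..l}}"

definition Pring :: "nat \<Rightarrow> nat \<Rightarrow> mpoly set" where
  "Pring l n = {p::mpoly. \<forall>m\<in>Poly_Mapping.keys p. Poly_Mapping.keys m \<subseteq> {1..n} \<and> Poly_Mapping.lookup p m \<in> RT l}"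

definition uvar :: "nat \<Rightarrow> laur" where
  "uvar i = Poly_Mapping.single (Poly_Mapping.single i 1) 1"

definition cst :: "laur \<Rightarrow> mpoly" where
  "cst r = Poly_Mapping.single 0 r"

definition xvar :: "nat \<Rightarrow> mpoly" where
  "xvar i = Poly_Mapping.single (Poly_Mapping.single i 1) 1"

definition esym :: "nat \<Rightarrow> nat set \<Rightarrow> mpoly" where
  "esym k S = (\<Sum>T\<in>{T. T \<subseteq> S \<and> card T = k}. \<Prod>i\<in>T. xvar i)"

text \<open>complete homogeneous symmetric polynomial h_m of a list of ring elements
(with repetitions allowed); h_0 = 1, and h_m [] = 0 for m > 0\<close>
definition hsym :: "nat \<Rightarrow> 'a::comm_ring_1 list \<Rightarrow> 'a" where
  "hsym m ys = (\<Sum>f\<in>{f. f \<in> {..<length ys} \<rightarrow>\<^sub>E {..m} \<and> sum f {..<length ys} = m}.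
                   \<Prod>j<length ys. (ys ! j) ^ f j)"

definition is_partition :: "nat list \<Rightarrow> nat \<Rightarrow> bool" where
  "is_partition lam n \<longleftrightarrow> sorted_wrt (\<ge>) lam \<and> (\<forall>x\<in>set lam. 0 < x) \<and> sum_list lam = n"

definition lpart :: "nat list \<Rightarrow> nat \<Rightarrow> nat" where
  "lpart lam j = (if 1 \<le> j \<and> j \<le> length lam then lam ! (j - 1) else 0)"

definition eta :: "nat list \<Rightarrow> nat \<Rightarrow> nat" where
  "eta lam j = card {i\<in>{1..length lam}. lpart lam i \<ge> j}"

definition pdual :: "nat list \<Rightarrow> nat \<Rightarrow> nat \<Rightarrow> nat" where
  "pdual lam n s = (\<Sum>j\<in>{n - s + 1..n}. eta lam j)"

definition phi_list :: "nat list \<Rightarrow> nat list" where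
  "phi_list lam = concat (map (\<lambda>r. concat (replicate (lpart lam r - lpart lam (r + 1)) [1..<r + 1]))
                               [1..<length lam + 1])"

definition phi :: "nat list \<Rightarrow> nat \<Rightarrow> nat" where
  "phi lam j = phi_list lam ! (j - 1)"

definition genpoly :: "nat list \<Rightarrow> nat set \<Rightarrow> int \<Rightarrow> mpoly" where
  "genpoly lam S d = (\<Sum>k\<in>{0..d}. (-1) ^ nat (d - k) * esym (nat k) S *
       cst (hsym (nat (d - k)) (map (\<lambda>j. uvar (phi lam j)) [1..<nat (int (card S) + 1 - d) + 1])))"

definition gens :: "nat list \<Rightarrow> nat \<Rightarrow> mpoly set" where
  "gens lam n = {genpoly lam S d | S d. S \<subseteq> {1..n} \<and> 1 \<le> card S
        \<and> d \<ge> int (card S) + 1 - int (pdual lam n (card S))}"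

definition ideal_gen :: "nat \<Rightarrow> nat \<Rightarrow> mpoly set \<Rightarrow> mpoly set" where
  "ideal_gen l n G = {p. \<exists>(m::nat) c g. (\<forall>j<m. c j \<in> Pring l n \<and> g j \<in> G) \<and> p = (\<Sum>j<m. c j * g j)}"

definition multinom :: "nat \<Rightarrow> nat list \<Rightarrow> nat" where
  "multinom n lam = fact n div (\<Prod>i<length lam. fact (lam ! i))"

end

theory Submission
  imports Defs
begin


definition mon :: "(nat \<Rightarrow>\<^sub>0 nat) \<Rightarrow> mpoly" where
  "mon m = Poly_Mapping.single m 1"

definition mdeg :: "(nat \<Rightarrow>\<^sub>0 nat) \<Rightarrow> nat" where
  "mdeg m = sum (Poly_Mapping.lookup m) (Poly_Mapping.keys m)"

definition Pd :: "nat \<Rightarrow> mpoly set" where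
  "Pd D = {p. \<forall>m\<in>Poly_Mapping.keys p. mdeg m \<le> D}"

lemma pm_expand:
  fixes p :: "'a \<Rightarrow>\<^sub>0 'b::comm_monoid_add"
  shows "p = (\<Sum>m\<in>Poly_Mapping.keys p. Poly_Mapping.single m (Poly_Mapping.lookup p m))"
proof (rule poly_mapping_eqI)
  fix k
  show "Poly_Mapping.lookup p k =
    Poly_Mapping.lookup (\<Sum>m\<in>Poly_Mapping.keys p. Poly_Mapping.single m (Poly_Mapping.lookup p m)) k"
    unfolding lookup_sum lookup_single
    by (cases "k \<in> Poly_Mapping.keys p") (auto simp: in_keys_iff when_def)
qed

lemma pm_mult_expand:
  fixes p q :: "'a::comm_monoid_add \<Rightarrow>\<^sub>0 'b::comm_ring_1"
  shows "p * q = (\<Sum>a\<in>Poly_Mapping.keys p. \<Sum>b\<in>Poly_Mapping.keys q.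
            Poly_Mapping.single (a + b) (Poly_Mapping.lookup p a * Poly_Mapping.lookup q b))"
proof -
  have "p * q = (\<Sum>m\<in>Poly_Mapping.keys p. Poly_Mapping.single m (Poly_Mapping.lookup p m)) *
     (\<Sum>m\<in>Poly_Mapping.keys q. Poly_Mapping.single m (Poly_Mapping.lookup q m))"
    using pm_expand[of p] pm_expand[of q] by simp
  also have "\<dots> = (\<Sum>a\<in>Poly_Mapping.keys p. \<Sum>b\<in>Poly_Mapping.keys q.
            Poly_Mapping.single a (Poly_Mapping.lookup p a) * Poly_Mapping.single b (Poly_Mapping.lookup q b))"
    by (simp add: sum_distrib_left sum_distrib_right sum.swap[of _ "Poly_Mapping.keys q"])
  finally show ?thesis by (simp add: mult_single)
qed

lemma keys_add_nat:
  fixes a b :: "'a \<Rightarrow>\<^sub>0 nat"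
  shows "Poly_Mapping.keys (a + b) = Poly_Mapping.keys a \<union> Poly_Mapping.keys b"
  by (auto simp: in_keys_iff lookup_add)

lemma mdeg_sum_superset:
  assumes "finite K" "Poly_Mapping.keys m \<subseteq> K"
  shows "mdeg m = sum (Poly_Mapping.lookup m) K"
  unfolding mdeg_def
  by (rule sum.mono_neutral_left) (use assms in \<open>auto simp: in_keys_iff\<close>)

lemma mdeg_add: "mdeg (a + b) = mdeg a + mdeg b"
proof -
  let ?K = "Poly_Mapping.keys a \<union> Poly_Mapping.keys b"
  have "mdeg (a+b) = sum (Poly_Mapping.lookup (a+b)) ?K"
    by (rule mdeg_sum_superset) (auto simp: keys_add_nat)
  also have "\<dots> = sum (Poly_Mapping.lookup a) ?K + sum (Poly_Mapping.lookup b) ?K"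
    by (simp add: lookup_add sum.distrib)
  also have "\<dots> = mdeg a + mdeg b"
    by (simp add: mdeg_sum_superset[symmetric])
  finally show ?thesis .
qed

lemma mdeg_zero[simp]: "mdeg 0 = 0" by (simp add: mdeg_def)

lemma mdeg_single[simp]: "mdeg (Poly_Mapping.single i k) = k"
  by (simp add: mdeg_def)

lemma RT_0[simp]: "0 \<in> RT l" by (simp add: RT_def)
lemma RT_1[simp]: "1 \<in> RT l" by (simp add: RT_def)
lemma RT_add[simp]: "a \<in> RT l \<Longrightarrow> b \<in> RT l \<Longrightarrow> a + b \<in> RT l"
  using keys_add[of a b] by (auto simp: RT_def)
lemma RT_uminus[simp]: "a \<in> RT l \<Longrightarrow> - a \<in> RT l"
  by (auto simp: RT_def)
lemma RT_diff[simp]: "a \<in> RT l \<Longrightarrow> b \<in> RT l \<Longrightarrow> a - b \<in> RT l"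
  using keys_diff[of a b] by (auto simp: RT_def)
lemma RT_mult[simp]: "a \<in> RT l \<Longrightarrow> b \<in> RT l \<Longrightarrow> a * b \<in> RT l"
proof -
  assume a: "a \<in> RT l" and b: "b \<in> RT l"
  have "\<forall>k\<in>Poly_Mapping.keys (a*b). Poly_Mapping.keys k \<subseteq> {1..l}"
  proof
    fix k assume "k \<in> Poly_Mapping.keys (a*b)"
    then obtain x y where "k = x + y" "x \<in> Poly_Mapping.keys a" "y \<in> Poly_Mapping.keys b"
      using keys_mult[of a b] by auto
    moreover have "Poly_Mapping.keys x \<subseteq> {1..l}" "Poly_Mapping.keys y \<subseteq> {1..l}"
      using a b \<open>x \<in> _\<close> \<open>y \<in> _\<close> by (auto simp: RT_def)
    ultimately show "Poly_Mapping.keys k \<subseteq> {1..l}" using keys_add[of x y] by blast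
  qed
  then show ?thesis by (simp add: RT_def)
qed
lemma RT_sum[simp]: "(\<And>i. i \<in> A \<Longrightarrow> f i \<in> RT l) \<Longrightarrow> sum f A \<in> RT l"
  by (induction A rule: infinite_finite_induct) auto
lemma RT_prod[simp]: "(\<And>i. i \<in> A \<Longrightarrow> f i \<in> RT l) \<Longrightarrow> prod f A \<in> RT l"
  by (induction A rule: infinite_finite_induct) auto
lemma RT_power[simp]: "a \<in> RT l \<Longrightarrow> a ^ k \<in> RT l"
  by (induction k) auto
lemma uvar_RT: "1 \<le> i \<Longrightarrow> i \<le> l \<Longrightarrow> uvar i \<in> RT l"
  by (auto simp: RT_def uvar_def)

lemma Pring_0[simp]: "0 \<in> Pring l n" by (simp add: Pring_def)
lemma Pring_1[simp]: "1 \<in> Pring l n" by (simp add: Pring_def)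
lemma Pring_lookup: "a \<in> Pring l n \<Longrightarrow> Poly_Mapping.lookup a m \<in> RT l"
  by (cases "m \<in> Poly_Mapping.keys a") (auto simp: Pring_def in_keys_iff)
lemma Pring_add[simp]: "a \<in> Pring l n \<Longrightarrow> b \<in> Pring l n \<Longrightarrow> a + b \<in> Pring l n"
  using keys_add[of a b] Pring_lookup[of a l n] Pring_lookup[of b l n]
  by (auto simp: Pring_def lookup_add)
lemma Pring_uminus[simp]: "a \<in> Pring l n \<Longrightarrow> - a \<in> Pring l n"
  by (auto simp: Pring_def)
lemma Pring_diff[simp]: "a \<in> Pring l n \<Longrightarrow> b \<in> Pring l n \<Longrightarrow> a - b \<in> Pring l n"
  using Pring_add[of a l n "-b"] by simp

lemma Pring_mult[simp]: "a \<in> Pring l n \<Longrightarrow> b \<in> Pring l n \<Longrightarrow> a * b \<in> Pring l n"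
proof -
  assume a: "a \<in> Pring l n" and b: "b \<in> Pring l n"
  have "\<forall>k\<in>Poly_Mapping.keys (a*b). Poly_Mapping.keys k \<subseteq> {1..n} \<and> Poly_Mapping.lookup (a*b) k \<in> RT l"
  proof
    fix k assume "k \<in> Poly_Mapping.keys (a*b)"
    then obtain x y where "k = x + y" "x \<in> Poly_Mapping.keys a" "y \<in> Poly_Mapping.keys b"
      using keys_mult[of a b] by auto
    then have "Poly_Mapping.keys k \<subseteq> {1..n}" using a b by (auto simp: Pring_def keys_add_nat)
    moreover have "Poly_Mapping.lookup (a*b) k \<in> RT l"
      apply (subst pm_mult_expand)
      apply (simp add: lookup_sum lookup_single when_def)
      using Pring_lookup[OF a] Pring_lookup[OF b] by auto
    ultimately show "Poly_Mapping.keys k \<subseteq> {1..n} \<and> Poly_Mapping.lookup (a*b) k \<in> RT l" by simp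
  qed
  then show ?thesis by (simp add: Pring_def)
qed
lemma Pring_sum[simp]: "(\<And>i. i \<in> A \<Longrightarrow> f i \<in> Pring l n) \<Longrightarrow> sum f A \<in> Pring l n"
  by (induction A rule: infinite_finite_induct) auto
lemma Pring_prod[simp]: "(\<And>i. i \<in> A \<Longrightarrow> f i \<in> Pring l n) \<Longrightarrow> prod f A \<in> Pring l n"
  by (induction A rule: infinite_finite_induct) auto
lemma Pring_power[simp]: "a \<in> Pring l n \<Longrightarrow> a ^ k \<in> Pring l n"
  by (induction k) auto
lemma Pring_cst[simp]: "r \<in> RT l \<Longrightarrow> cst r \<in> Pring l n"
  by (auto simp: Pring_def cst_def)
lemma Pring_xvar[simp]: "1 \<le> i \<Longrightarrow> i \<le> n \<Longrightarrow> xvar i \<in> Pring l n"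
  by (auto simp: Pring_def xvar_def)
lemma Pring_mon[simp]: "Poly_Mapping.keys m \<subseteq> {1..n} \<Longrightarrow> mon m \<in> Pring l n"
  by (auto simp: Pring_def mon_def)
lemma Pring_mono: "n \<le> n' \<Longrightarrow> p \<in> Pring l n \<Longrightarrow> p \<in> Pring l n'"
  by (fastforce simp: Pring_def)

lemma Pd_0[simp]: "0 \<in> Pd D" by (simp add: Pd_def)
lemma Pd_1[simp]: "1 \<in> Pd D" by (simp add: Pd_def mdeg_def)
lemma Pd_mono: "p \<in> Pd a \<Longrightarrow> a \<le> b \<Longrightarrow> p \<in> Pd b"
  by (fastforce simp: Pd_def)
lemma Pd_add[simp]: "a \<in> Pd D \<Longrightarrow> b \<in> Pd D \<Longrightarrow> a + b \<in> Pd D"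
  using keys_add[of a b] by (auto simp: Pd_def)
lemma Pd_uminus[simp]: "a \<in> Pd D \<Longrightarrow> - a \<in> Pd D"
  by (auto simp: Pd_def)
lemma Pd_diff[simp]: "a \<in> Pd D \<Longrightarrow> b \<in> Pd D \<Longrightarrow> a - b \<in> Pd D"
  using keys_diff[of a b] by (auto simp: Pd_def)
lemma Pd_sum[simp]: "(\<And>i. i \<in> A \<Longrightarrow> f i \<in> Pd D) \<Longrightarrow> sum f A \<in> Pd D"
  by (induction A rule: infinite_finite_induct) auto
lemma Pd_mult: "a \<in> Pd D \<Longrightarrow> b \<in> Pd E \<Longrightarrow> a * b \<in> Pd (D + E)"
proof -
  assume a: "a \<in> Pd D" and b: "b \<in> Pd E"
  have "\<forall>k\<in>Poly_Mapping.keys (a*b). mdeg k \<le> D + E"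
  proof
    fix k assume "k \<in> Poly_Mapping.keys (a*b)"
    then obtain x y where "k = x + y" "x \<in> Poly_Mapping.keys a" "y \<in> Poly_Mapping.keys b"
      using keys_mult[of a b] by auto
    then show "mdeg k \<le> D + E" using a b by (auto simp: mdeg_add add_mono Pd_def)
  qed
  then show ?thesis by (simp add: Pd_def)
qed
lemma Pd_prod: "finite A \<Longrightarrow> (\<And>i. i \<in> A \<Longrightarrow> f i \<in> Pd 1) \<Longrightarrow> prod f A \<in> Pd (card A)"
proof (induction A rule: finite_induct)
  case (insert x F)
  then show ?case using Pd_mult[of "f x" 1 "prod f F" "card F"] by simp
qed simp
lemma Pd_power: "a \<in> Pd D \<Longrightarrow> a ^ k \<in> Pd (D * k)"
proof (induction k)
  case (Suc k)
  then show ?case using Pd_mult[of a D "a^k" "D*k"] by simp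
qed simp
lemma Pd_cst[simp]: "cst r \<in> Pd D"
  by (auto simp: Pd_def cst_def)
lemma Pd_xvar[simp]: "xvar i \<in> Pd 1"
  by (auto simp: Pd_def xvar_def)
lemma Pd_mon: "mon m \<in> Pd (mdeg m)"
  by (auto simp: Pd_def mon_def)

lemma mon_mult: "mon a * mon b = mon (a + b)"
  by (simp add: mon_def mult_single)
lemma mon_0[simp]: "mon 0 = 1" by (simp add: mon_def)
lemma xvar_mon: "xvar i = mon (Poly_Mapping.single i 1)"
  by (simp add: xvar_def mon_def)
lemma xvar_power: "xvar i ^ k = mon (Poly_Mapping.single i k)"
proof (induction k)
  case (Suc k)
  then show ?case by (simp add: xvar_mon mon_mult single_add[symmetric])
qed simp
lemma cst_mon: "cst r * mon m = Poly_Mapping.single m r"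
  by (simp add: cst_def mon_def mult_single)
lemma cst_add: "cst (a + b) = cst a + cst b" by (simp add: cst_def single_add)
lemma cst_mult: "cst (a * b) = cst a * cst b" by (simp add: cst_def mult_single)
lemma cst_0[simp]: "cst 0 = 0" by (simp add: cst_def)
lemma cst_1[simp]: "cst 1 = 1" by (simp add: cst_def)

lemma poly_expand: "p = (\<Sum>m\<in>Poly_Mapping.keys p. cst (Poly_Mapping.lookup p m) * mon m)"
  by (subst pm_expand) (simp add: cst_mon)



lemma esym_0: "finite S \<Longrightarrow> esym 0 S = 1"
proof -
  assume fin: "finite S"
  have "{T. T \<subseteq> S \<and> card T = 0} = {{}}"
  proof (intro set_eqI iffI)
    fix T assume "T \<in> {T. T \<subseteq> S \<and> card T = 0}"
    then have "T \<subseteq> S" "card T = 0" by simp_all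
    moreover have "finite T" using \<open>T \<subseteq> S\<close> fin finite_subset by blast
    ultimately show "T \<in> {{}}" by simp
  qed simp
  then show ?thesis by (simp add: esym_def)
qed

lemma esym_big: "finite S \<Longrightarrow> card S < d \<Longrightarrow> esym d S = 0"
proof -
  assume fin: "finite S" and lt: "card S < d"
  have e: "{T. T \<subseteq> S \<and> card T = d} = {}"
  proof (intro set_eqI iffI)
    fix T assume "T \<in> {T. T \<subseteq> S \<and> card T = d}"
    then have "T \<subseteq> S" "card T = d" by simp_all
    then have "card T \<le> card S" using card_mono[OF fin] by blast
    then show "T \<in> {}" using lt \<open>card T = d\<close> by simp
  qed simp
  show ?thesis unfolding esym_def e by simp
qed

lemma esym_insert:
  assumes "finite S" "x \<notin> S"
  shows "esym (Suc d) (insert x S) = esym (Suc d) S + xvar x * esym d S"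
proof -
  let ?A = "{T. T \<subseteq> S \<and> card T = Suc d}"
  let ?B = "{T. T \<subseteq> S \<and> card T = d}"
  have fin: "finite ?A" "finite ?B" using assms(1) by auto
  have eq: "{T. T \<subseteq> insert x S \<and> card T = Suc d} = ?A \<union> insert x ` ?B"
  proof (intro set_eqI iffI)
    fix T assume T: "T \<in> {T. T \<subseteq> insert x S \<and> card T = Suc d}"
    show "T \<in> ?A \<union> insert x ` ?B"
    proof (cases "x \<in> T")
      case True
      then have "T = insert x (T - {x})" by auto
      moreover have "T - {x} \<in> ?B" using T True assms
        by (auto simp: card_Diff_singleton intro: finite_subset)
      ultimately show ?thesis by blast
    next
      case False
      then show ?thesis using T by auto
    qed
  next
    fix T assume "T \<in> ?A \<union> insert x ` ?B"
    then show "T \<in> {T. T \<subseteq> insert x S \<and> card T = Suc d}"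
    proof
      assume "T \<in> insert x ` ?B"
      then obtain T' where "T = insert x T'" "T' \<subseteq> S" "card T' = d" by auto
      moreover have "finite T'" using \<open>T' \<subseteq> S\<close> assms(1) finite_subset by blast
      moreover have "x \<notin> T'" using \<open>T' \<subseteq> S\<close> assms(2) by blast
      ultimately show ?thesis by auto
    qed auto
  qed
  have disj: "?A \<inter> insert x ` ?B = {}" using assms by auto
  have inj: "inj_on (insert x) ?B"
  proof (rule inj_onI)
    fix a b assume "a \<in> ?B" "b \<in> ?B" "insert x a = insert x b"
    moreover have "a = insert x a - {x}" "b = insert x b - {x}" using assms \<open>a \<in> ?B\<close> \<open>b \<in> ?B\<close> by auto
    ultimately show "a = b" by simp
  qed
  have "esym (Suc d) (insert x S) = (\<Sum>T\<in>?A. \<Prod>i\<in>T. xvar i) + (\<Sum>T\<in>insert x ` ?B. \<Prod>i\<in>T. xvar i)"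
    unfolding esym_def eq by (rule sum.union_disjoint) (use fin disj in auto)
  also have "(\<Sum>T\<in>insert x ` ?B. \<Prod>i\<in>T. xvar i) = (\<Sum>T\<in>?B. \<Prod>i\<in>insert x T. xvar i)"
    by (rule sum.reindex[OF inj, unfolded comp_def])
  also have "\<dots> = (\<Sum>T\<in>?B. xvar x * (\<Prod>i\<in>T. xvar i))"
  proof (rule sum.cong)
    fix T assume "T \<in> ?B"
    then have "finite T" "x \<notin> T" using assms finite_subset by auto
    then show "(\<Prod>i\<in>insert x T. xvar i) = xvar x * (\<Prod>i\<in>T. xvar i)" by simp
  qed simp
  finally show ?thesis by (simp only: esym_def sum_distrib_left)
qed

lemma esym_Pring: "S \<subseteq> {1..n} \<Longrightarrow> esym d S \<in> Pring l n"
  unfolding esym_def by (intro Pring_sum Pring_prod) auto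

lemma esym_Pd: "finite S \<Longrightarrow> esym d S \<in> Pd d"
  unfolding esym_def
proof (intro Pd_sum)
  fix T assume "finite S" "T \<in> {T. T \<subseteq> S \<and> card T = d}"
  then have "finite T" "card T = d" by (auto intro: finite_subset)
  then show "(\<Prod>i\<in>T. xvar i) \<in> Pd d" using Pd_prod[of T xvar] Pd_xvar by metis
qed

lemma hsym_0: "hsym 0 ys = 1"
proof -
  have "{f. f \<in> {..<length ys} \<rightarrow>\<^sub>E {..0::nat} \<and> sum f {..<length ys} = 0} = {(\<lambda>j\<in>{..<length ys}. 0)}"
  proof -
    let ?A = "{..<length ys}"
    have "?A \<rightarrow>\<^sub>E {..0::nat} = PiE ?A (\<lambda>j. {(\<lambda>j\<in>?A. 0::nat) j})"
      by (rule PiE_cong) auto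
    also have "\<dots> = {(\<lambda>j\<in>?A. 0)}" by (rule PiE_singleton, rule restrict_extensional)
    finally show ?thesis by auto
  qed
  then show ?thesis by (simp add: hsym_def)
qed

lemma hsym_RT: "(\<And>y. y \<in> set ys \<Longrightarrow> y \<in> RT l) \<Longrightarrow> hsym m ys \<in> RT l"
  unfolding hsym_def by (intro RT_sum RT_prod RT_power) auto

lemma Pd_neg1_power: "(-1::mpoly) ^ k \<in> Pd 0"
  using Pd_power[of "-1::mpoly" 0 k] by simp

lemma Pring_neg1_power: "(-1::mpoly) ^ k \<in> Pring l n"
  by simp

lemma genpoly_diff:
  assumes fin: "S \<subseteq> {1..n}"
    and ys: "\<And>y. y \<in> set (map (\<lambda>j. uvar (phi lam j)) [1..<nat (int (card S) + 1 - int d) + 1]) \<Longrightarrow> y \<in> RT l"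
  shows "genpoly lam S (int d) - esym d S \<in> Pring l n \<inter> Pd (d - 1)"
    and "d = 0 \<Longrightarrow> genpoly lam S (int d) - esym d S = 0"
proof -
  have finS: "finite S" using fin finite_subset by blast
  let ?ys = "map (\<lambda>j. uvar (phi lam j)) [1..<nat (int (card S) + 1 - int d) + 1]"
  let ?t = "\<lambda>k. (-1) ^ nat (int d - k) * esym (nat k) S * cst (hsym (nat (int d - k)) ?ys)"
  have "genpoly lam S (int d) = (\<Sum>k\<in>insert (int d) {0..<int d}. ?t k)"
    unfolding genpoly_def by (rule sum.cong) auto
  also have "\<dots> = ?t (int d) + (\<Sum>k\<in>{0..<int d}. ?t k)"
    by (rule sum.insert) auto
  also have "?t (int d) = esym d S" by (simp add: hsym_0)
  finally have eq: "genpoly lam S (int d) - esym d S = (\<Sum>k\<in>{0..<int d}. ?t k)" by simp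
  have "(\<Sum>k\<in>{0..<int d}. ?t k) \<in> Pring l n \<inter> Pd (d - 1)"
  proof (intro IntI Pring_sum Pd_sum)
    fix k assume k: "k \<in> {0..<int d}"
    have "hsym (nat (int d - k)) ?ys \<in> RT l" by (rule hsym_RT) (rule ys)
    then show "?t k \<in> Pring l n"
      using fin by (intro Pring_mult Pring_neg1_power esym_Pring Pring_cst)
    have tk: "?t k \<in> Pd (0 + nat k + 0)"
      by (intro Pd_mult Pd_neg1_power esym_Pd finS Pd_cst)
    have "nat k < d" using k by (simp add: nat_less_iff)
    then have "nat k \<le> d - 1" by simp
    then show "?t k \<in> Pd (d - 1)" using Pd_mono[OF tk] by simp
  qed
  then show "genpoly lam S (int d) - esym d S \<in> Pring l n \<inter> Pd (d - 1)" using eq by (simp only:)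
  show "d = 0 \<Longrightarrow> genpoly lam S (int d) - esym d S = 0"
  proof -
    assume "d = 0"
    then have e: "{0..<int d} = {}" by simp
    show ?thesis using eq by (simp only: e sum.empty)
  qed
qed



abbreviation srt :: "nat list \<Rightarrow> bool" where "srt lam \<equiv> sorted_wrt (\<ge>) lam"

lemma card_filter_sum: "card {i. i < (l::nat) \<and> P i} = (\<Sum>i<l. if P i then 1 else 0)"
proof (induction l)
  case (Suc l)
  have "{i. i < Suc l \<and> P i} = (if P l then insert l {i. i < l \<and> P i} else {i. i < l \<and> P i})"
    by (auto simp: less_Suc_eq)
  then show ?case using Suc by auto
qed simp

lemma eta_alt: "eta lam t = card {i. i < length lam \<and> t \<le> lam ! i}"
proof -
  have "{i\<in>{1..length lam}. lpart lam i \<ge> t} = Suc ` {i. i < length lam \<and> t \<le> lam ! i}"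
  proof (intro set_eqI iffI)
    fix x assume "x \<in> {i\<in>{1..length lam}. lpart lam i \<ge> t}"
    then have "x - 1 \<in> {i. i < length lam \<and> t \<le> lam ! i}" "x = Suc (x - 1)"
      by (auto simp: lpart_def)
    then show "x \<in> Suc ` {i. i < length lam \<and> t \<le> lam ! i}" by blast
  qed (auto simp: lpart_def)
  then show ?thesis unfolding eta_def by (simp add: card_image)
qed

lemma eta_sum: "eta lam t = (\<Sum>i<length lam. if t \<le> lam ! i then 1 else 0)"
  unfolding eta_alt card_filter_sum ..

lemma eta_total:
  assumes "\<And>x. x \<in> set lam \<Longrightarrow> x \<le> N"
  shows "(\<Sum>t\<in>{1..N}. eta lam t) = sum_list lam"
proof -
  have "(\<Sum>t\<in>{1..N}. eta lam t) = (\<Sum>i<length lam. \<Sum>t\<in>{1..N}. if t \<le> lam ! i then 1 else 0)"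
    unfolding eta_sum by (rule sum.swap)
  also have "\<dots> = (\<Sum>i<length lam. lam ! i)"
  proof (rule sum.cong)
    fix i assume "i \<in> {..<length lam}"
    then have le: "lam ! i \<le> N" using assms by simp
    have "(\<Sum>t\<in>{1..N}. if t \<le> lam ! i then 1 else 0) = card {t\<in>{1..N}. t \<le> lam ! i}"
      by (simp add: sum.If_cases Int_def)
    also have "{t\<in>{1..N}. t \<le> lam ! i} = {1..lam ! i}" using le by auto
    then have "card {t\<in>{1..N}. t \<le> lam ! i} = lam ! i" by simp
    finally show "(\<Sum>t\<in>{1..N}. if t \<le> lam ! i then 1 else (0::nat)) = lam ! i" .
  qed simp
  also have "\<dots> = sum_list lam" by (simp add: sum_list_sum_nth atLeast0LessThan)
  finally show ?thesis .
qed

lemma eta_zero: "sum_list lam < t \<Longrightarrow> eta lam t = 0"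
proof -
  assume a: "sum_list lam < t"
  have "{i. i < length lam \<and> t \<le> lam ! i} = {}"
  proof (intro set_eqI iffI)
    fix i assume "i \<in> {i. i < length lam \<and> t \<le> lam ! i}"
    then show "i \<in> {}" using elem_le_sum_list[of i lam] a by simp
  qed simp
  then show ?thesis unfolding eta_alt by simp
qed

lemma pdual_n: "sum_list lam = n \<Longrightarrow> pdual lam n n = n"
  unfolding pdual_def using eta_total[of lam n] member_le_sum_list[of _ lam] by simp

lemma pdual_n1:
  assumes "sum_list lam = n" "1 \<le> n"
  shows "pdual lam n (n - 1) + eta lam 1 = n"
proof -
  have "{1..n} = insert 1 {2..n}" using assms(2) by auto
  then have a: "(\<Sum>t\<in>{1..n}. eta lam t) = eta lam 1 + (\<Sum>t\<in>{2..n}. eta lam t)" by simp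
  have e: "{n - (n - 1) + 1..n} = {2..n}" using assms(2) by auto
  have b: "pdual lam n (n - 1) = (\<Sum>t\<in>{2..n}. eta lam t)" unfolding pdual_def e ..
  have c: "(\<Sum>t\<in>{1..n}. eta lam t) = n" using eta_total[of lam n] member_le_sum_list[of _ lam] assms(1) by simp
  show ?thesis using a b c by linarith
qed

lemma pdual_le: "sum_list lam = n \<Longrightarrow> pdual lam n s \<le> n"
proof -
  assume a: "sum_list lam = n"
  have "pdual lam n s \<le> (\<Sum>t\<in>{1..n}. eta lam t)"
    unfolding pdual_def by (rule sum_mono2) auto
  then show ?thesis using eta_total[of lam n] member_le_sum_list[of _ lam] a by simp
qed

lemma pdual_step: "s < n \<Longrightarrow> pdual lam n (Suc s) = eta lam (n - s) + pdual lam n s"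
proof -
  assume "s < n"
  then have "{n - Suc s + 1..n} = insert (n - s) {n - s + 1..n}" by auto
  then show ?thesis unfolding pdual_def by simp
qed

lemma eta_le_k:
  assumes "srt lam" "k < length lam" "lam ! k < t"
  shows "eta lam t \<le> k"
proof -
  have "{i. i < length lam \<and> t \<le> lam ! i} \<subseteq> {..<k}"
  proof
    fix i assume i: "i \<in> {i. i < length lam \<and> t \<le> lam ! i}"
    show "i \<in> {..<k}"
    proof (rule ccontr)
      assume "i \<notin> {..<k}"
      then have "k \<le> i" by simp
      then have "lam ! i \<le> lam ! k"
        using sorted_wrt_nth_less[OF assms(1), of k i] i by (cases "k = i") auto
      then show False using i assms(3) by simp
    qed
  qed
  from card_mono[OF finite_lessThan this] show ?thesis unfolding eta_alt by simp
qed

lemma downclosed_eq: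
  fixes A :: "nat set"
  assumes "finite A" "\<And>i i'. i \<in> A \<Longrightarrow> i' < i \<Longrightarrow> i' \<in> A"
  shows "A = {..<card A}"
proof (cases "A = {}")
  case False
  have "A = {..Max A}"
  proof (intro set_eqI iffI)
    fix x assume "x \<in> A" then show "x \<in> {..Max A}" using assms(1) by simp
  next
    fix x assume "x \<in> {..Max A}"
    then have "x = Max A \<or> x < Max A" by auto
    then show "x \<in> A" using Max_in[OF assms(1) False] assms(2) by auto
  qed
  then show ?thesis by (metis card_atMost lessThan_Suc_atMost)
qed simp

definition nzrows :: "nat list \<Rightarrow> nat" where
  "nzrows lam = card {i. i < length lam \<and> 0 < lam ! i}"

lemma nzrows_set:
  assumes "srt lam"
  shows "{i. i < length lam \<and> 0 < lam ! i} = {..<nzrows lam}"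
  unfolding nzrows_def
proof (rule downclosed_eq)
  fix i i' assume "i \<in> {i. i < length lam \<and> 0 < lam ! i}" "i' < i"
  then show "i' \<in> {i. i < length lam \<and> 0 < lam ! i}"
    using sorted_wrt_nth_less[OF assms, of i' i] by auto
qed simp

lemma nzrows_eta: "eta lam 1 = nzrows lam"
  unfolding eta_alt nzrows_def by (simp add: Suc_le_eq)

lemma nzrows_le: "nzrows lam \<le> length lam"
proof -
  have "{i. i < length lam \<and> 0 < lam ! i} \<subseteq> {..<length lam}" by auto
  from card_mono[OF finite_lessThan this] show ?thesis unfolding nzrows_def by simp
qed

lemma nzrows_pos: "srt lam \<Longrightarrow> k < nzrows lam \<Longrightarrow> 0 < lam ! k \<and> k < length lam"
  using nzrows_set[of lam] by blast

lemma nzrows_zero: "srt lam \<Longrightarrow> nzrows lam \<le> k \<Longrightarrow> k < length lam \<Longrightarrow> lam ! k = 0"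
proof -
  assume s: "srt lam" and a: "nzrows lam \<le> k" "k < length lam"
  have "k \<notin> {i. i < length lam \<and> 0 < lam ! i}" unfolding nzrows_set[OF s] using a by simp
  then show ?thesis using a by simp
qed

lemma sum_nzrows: "srt lam \<Longrightarrow> (\<Sum>k<nzrows lam. lam ! k) = sum_list lam"
proof -
  assume s: "srt lam"
  have "sum_list lam = (\<Sum>k<length lam. lam ! k)" by (simp add: sum_list_sum_nth atLeast0LessThan)
  also have "\<dots> = (\<Sum>k<nzrows lam. lam ! k)"
    by (rule sum.mono_neutral_right) (use nzrows_le[of lam] nzrows_zero[OF s] in auto)
  finally show ?thesis by simp
qed

lemma nzrows_pos_n: "srt lam \<Longrightarrow> sum_list lam = n \<Longrightarrow> 1 \<le> n \<Longrightarrow> 1 \<le> nzrows lam"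
  using sum_nzrows[of lam] by (cases "nzrows lam") auto

subsection \<open>decreasing one row\<close>

definition fprod :: "nat list \<Rightarrow> nat" where
  "fprod lam = (\<Prod>i<length lam. fact (lam ! i))"

lemma fprod_dvd: "fprod lam dvd fact (sum_list lam)"
proof (induction lam)
  case Nil then show ?case by (simp add: fprod_def)
next
  case (Cons x xs)
  have "fprod (x # xs) = fact x * fprod xs"
    unfolding fprod_def by (simp del: prod.lessThan_Suc add: prod.lessThan_Suc_shift)
  also have "\<dots> dvd fact x * fact (sum_list xs)" using Cons by simp
  also have "fact x * fact (sum_list xs) dvd (fact (x + sum_list xs) :: nat)"
  proof -
    have "fact x * fact (sum_list xs) * (x + sum_list xs choose x) = (fact (x + sum_list xs) :: nat)"
      using binomial_fact_lemma[of x "x + sum_list xs"] by simp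
    then show ?thesis by (metis dvd_triv_left)
  qed
  finally show ?case by simp
qed

lemma multinom_eq: "sum_list lam = n \<Longrightarrow> multinom n lam * fprod lam = fact n"
  using fprod_dvd[of lam] unfolding multinom_def fprod_def[symmetric] by simp

lemma fprod_pos: "0 < fprod lam"
  unfolding fprod_def by simp

lemma row_dec:
  assumes srt: "srt lam" and k: "k < length lam" and c: "lam ! k = c" "1 \<le> c"
  shows "\<exists>lam'. length lam' = length lam \<and> srt lam' \<and> sum_list lam' + 1 = sum_list lam
     \<and> (\<forall>t\<ge>1. eta lam' t + (if t = c then 1 else 0) = eta lam t)
     \<and> fprod lam' * c = fprod lam"
proof -
  let ?A = "{i. i < length lam \<and> c \<le> lam ! i}"
  define j where "j = Max ?A"
  have finA: "finite ?A" by simp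
  have kA: "k \<in> ?A" using k c by simp
  have jA: "j \<in> ?A" unfolding j_def using Max_in[OF finA] kA by blast
  have kj: "k \<le> j" unfolding j_def using Max_ge[OF finA kA] .
  have jl: "j < length lam" using jA by simp
  have lj: "lam ! j = c"
  proof -
    have "lam ! j \<le> lam ! k" using sorted_wrt_nth_less[OF srt, of k j] kj jl by (cases "k = j") auto
    then show ?thesis using jA c by simp
  qed
  have after: "\<And>i. j < i \<Longrightarrow> i < length lam \<Longrightarrow> lam ! i < c"
  proof -
    fix i assume "j < i" "i < length lam"
    show "lam ! i < c"
    proof (rule ccontr)
      assume "\<not> lam ! i < c"
      then have "i \<in> ?A" using \<open>i < length lam\<close> by simp
      then have "i \<le> j" unfolding j_def using Max_ge[OF finA] by blast
      then show False using \<open>j < i\<close> by simp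
    qed
  qed
  define lam' where "lam' = lam[j := c - 1]"
  have len: "length lam' = length lam" by (simp add: lam'_def)
  have nth': "\<And>i. lam' ! i = (if i = j then c - 1 else lam ! i)"
    unfolding lam'_def using jl by (auto simp: nth_list_update)
  have srt': "srt lam'"
    unfolding sorted_wrt_iff_nth_less len
  proof (intro allI impI)
    fix a b assume ab: "a < b" "b < length lam"
    show "lam' ! b \<le> lam' ! a"
    proof (cases "a = j")
      case True
      then show ?thesis using after[of b] ab by (auto simp: nth')
    next
      case False
      note aj = False
      show ?thesis
      proof (cases "b = j")
        case True
        then have "lam ! j \<le> lam ! a" using sorted_wrt_nth_less[OF srt, of a b] ab by simp
        then show ?thesis using True aj lj by (simp add: nth')
      next
        case False
        then show ?thesis using aj sorted_wrt_nth_less[OF srt, of a b] ab by (simp add: nth')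
      qed
    qed
  qed
  have sum': "sum_list lam' + 1 = sum_list lam"
  proof -
    have "sum_list lam' = sum_list lam + (c - 1) - c"
      unfolding lam'_def using sum_list_update[OF jl, of "c - 1"] lj by simp
    moreover have "c \<le> sum_list lam" using elem_le_sum_list[OF jl] lj by simp
    ultimately show ?thesis using c by simp
  qed
  have eta': "\<forall>t\<ge>1. eta lam' t + (if t = c then 1 else 0) = eta lam t"
  proof (intro allI impI)
    fix t :: nat assume t: "1 \<le> t"
    let ?B = "{i. i < length lam \<and> t \<le> lam ! i}"
    let ?B' = "{i. i < length lam \<and> t \<le> lam' ! i}"
    show "eta lam' t + (if t = c then 1 else 0) = eta lam t"
    proof (cases "t = c")
      case True
      then have "?B = insert j ?B'" "j \<notin> ?B'" using jl lj c by (auto simp: nth' split: if_splits)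
      then show ?thesis unfolding eta_alt len using True by simp
    next
      case False
      then have "?B = ?B'" using jl lj t by (auto simp: nth' split: if_splits)
      then show ?thesis unfolding eta_alt len using False by simp
    qed
  qed
  have fp: "fprod lam' * c = fprod lam"
  proof -
    have "fprod lam = fact (lam ! j) * (\<Prod>i\<in>{..<length lam} - {j}. fact (lam ! i))"
      unfolding fprod_def by (rule prod.remove) (use jl in auto)
    moreover have "fprod lam' = fact (lam' ! j) * (\<Prod>i\<in>{..<length lam} - {j}. fact (lam' ! i))"
      unfolding fprod_def len by (rule prod.remove) (use jl in auto)
    moreover have "(\<Prod>i\<in>{..<length lam} - {j}. fact (lam' ! i)) = (\<Prod>i\<in>{..<length lam} - {j}. fact (lam ! i))"
      by (rule prod.cong) (auto simp: nth')
    moreover have "fact (lam' ! j) * c = (fact (lam ! j) :: nat)"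
    proof -
      have "fact c = c * (fact (c - 1) :: nat)" using c by (cases c) auto
      then show ?thesis using lj by (simp add: nth')
    qed
    ultimately show ?thesis by (metis mult.assoc mult.commute)
  qed
  show ?thesis using len srt' sum' eta' fp by blast
qed

lemma multinom_pascal:
  assumes "sum_list lam = n" "1 \<le> n" "srt lam"
    and M: "\<And>k. k < nzrows lam \<Longrightarrow> fprod (lams k) * lam ! k = fprod lam \<and> sum_list (lams k) = n - 1"
  shows "(\<Sum>k<nzrows lam. multinom (n - 1) (lams k)) = multinom n lam"
proof -
  have "(\<Sum>k<nzrows lam. multinom (n - 1) (lams k)) * fprod lam
      = (\<Sum>k<nzrows lam. multinom (n - 1) (lams k) * fprod (lams k) * lam ! k)"
    unfolding sum_distrib_right by (rule sum.cong) (use M in \<open>auto simp: mult.assoc\<close>)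
  also have "\<dots> = (\<Sum>k<nzrows lam. fact (n - 1) * lam ! k)"
  proof (rule sum.cong)
    fix k assume "k \<in> {..<nzrows lam}"
    then have "sum_list (lams k) = n - 1" using M by simp
    then show "multinom (n - 1) (lams k) * fprod (lams k) * lam ! k = fact (n - 1) * lam ! k"
      using multinom_eq[of "lams k" "n - 1"] by simp
  qed simp
  also have "\<dots> = fact (n - 1) * n"
    using sum_nzrows[OF assms(3)] assms(1) by (simp add: sum_distrib_left[symmetric])
  also have "\<dots> = fact n"
  proof -
    have "fact n = n * (fact (n - 1) :: nat)" using assms(2) by (cases n) auto
    then show ?thesis by simp
  qed
  also have "\<dots> = multinom n lam * fprod lam" using multinom_eq[OF assms(1)] by simp
  finally show ?thesis using fprod_pos[of lam] by simp
qed

lemma lpart_mono: "srt lam \<Longrightarrow> 1 \<le> r \<Longrightarrow> lpart lam (Suc r) \<le> lpart lam r"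
  unfolding lpart_def using sorted_wrt_nth_less[of "(\<ge>)" lam "r - 1" r]
  by (auto simp: Suc_le_eq)

lemma abel_sum:
  assumes "\<And>r. 1 \<le> r \<Longrightarrow> f (Suc r) \<le> (f r :: nat)"
  shows "(\<Sum>r\<in>{1..m}. r * (f r - f (Suc r))) + m * f (Suc m) = (\<Sum>r\<in>{1..m}. f r)"
proof (induction m)
  case (Suc m)
  have le: "f (Suc (Suc m)) \<le> f (Suc m)" using assms by simp
  have "(\<Sum>r\<in>{1..Suc m}. r * (f r - f (Suc r))) + Suc m * f (Suc (Suc m))
      = (\<Sum>r\<in>{1..m}. r * (f r - f (Suc r))) + Suc m * (f (Suc m) - f (Suc (Suc m))) + Suc m * f (Suc (Suc m))"
    by simp
  also have "\<dots> = (\<Sum>r\<in>{1..m}. r * (f r - f (Suc r))) + Suc m * f (Suc m)"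
  proof -
    have "Suc m * (a - b) + Suc m * b = Suc m * a" if "b \<le> a" for a b :: nat
      using that by (metis add_mult_distrib2 le_add_diff_inverse2)
    from this[OF le] show ?thesis by (simp only: add.assoc)
  qed
  also have "\<dots> = (\<Sum>r\<in>{1..m}. r * (f r - f (Suc r))) + m * f (Suc m) + f (Suc m)" by simp
  also have "\<dots> = (\<Sum>r\<in>{1..Suc m}. f r)" using Suc by simp
  finally show ?case .
qed simp

lemma length_phi_list:
  assumes "srt lam"
  shows "length (phi_list lam) = sum_list lam"
proof -
  let ?f = "lpart lam"
  have "length (phi_list lam) = sum_list (map (\<lambda>r. (?f r - ?f (r + 1)) * r) [1..<length lam + 1])"
    unfolding phi_list_def length_concat map_map by (simp add: o_def sum_list_replicate length_concat del: upt_Suc)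
  also have "\<dots> = (\<Sum>r\<in>{1..<length lam + 1}. (?f r - ?f (r + 1)) * r)"
    by (simp only: sum_set_upt_conv_sum_list_nat[symmetric] set_upt)
  also have "\<dots> = (\<Sum>r\<in>{1..length lam}. r * (?f r - ?f (Suc r)))"
    by (simp add: atLeastLessThanSuc_atLeastAtMost mult.commute)
  also have "\<dots> = (\<Sum>r\<in>{1..length lam}. ?f r)"
    using abel_sum[of ?f "length lam"] lpart_mono[OF assms] by (simp add: lpart_def)
  also have "\<dots> = (\<Sum>i<length lam. lam ! i)"
  proof -
    have "(\<Sum>r\<in>{1..length lam}. ?f r) = (\<Sum>i<length lam. ?f (Suc i))"
      using sum.atLeast1_atMost_eq[of ?f "length lam"] by simp
    also have "\<dots> = (\<Sum>i<length lam. lam ! i)" by (simp add: lpart_def)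
    finally show ?thesis .
  qed
  finally show ?thesis by (simp add: sum_list_sum_nth atLeast0LessThan)
qed

lemma set_phi_list: "set (phi_list lam) \<subseteq> {1..length lam}"
  unfolding phi_list_def by auto

lemma phi_range:
  assumes "srt lam" "sum_list lam = n" "1 \<le> j" "j \<le> n"
  shows "phi lam j \<in> {1..length lam}"
proof -
  have "j - 1 < length (phi_list lam)" using assms length_phi_list by simp
  then have "phi lam j \<in> set (phi_list lam)" unfolding phi_def by simp
  then show ?thesis using set_phi_list by blast
qed



lemma Pd_xvar_Suc[simp]: "xvar i \<in> Pd (Suc 0)" using Pd_xvar by simp


lemma sum_concat:
  "(\<Sum>j<m1. f j) + (\<Sum>j<(m2::nat). g j) = (\<Sum>j<m1+m2. if j < m1 then f j else g (j - m1))"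
proof (induction m2)
  case 0
  have "(\<Sum>j<m1. f j) = (\<Sum>j<m1. if j < m1 then f j else g (j - m1))" by (rule sum.cong) auto
  then show ?case by simp
next
  case (Suc m2)
  let ?h = "\<lambda>j. if j < m1 then f j else g (j - m1)"
  have e: "(\<Sum>j<m1 + Suc m2. ?h j) = (\<Sum>j<m1+m2. ?h j) + g m2" by simp
  have e2: "(\<Sum>j<Suc m2. g j) = (\<Sum>j<m2. g j) + g m2" by simp
  show ?case unfolding e e2 Suc.IH[symmetric] by (simp only: add.assoc)
qed

definition tgen :: "nat list \<Rightarrow> nat \<Rightarrow> nat set \<Rightarrow> nat \<Rightarrow> bool" where
  "tgen lam n S d \<longleftrightarrow> S \<subseteq> {1..n} \<and> 1 \<le> card S \<and> int d \<ge> int (card S) + 1 - int (pdual lam n (card S))"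

definition TS :: "nat list \<Rightarrow> nat \<Rightarrow> nat \<Rightarrow> mpoly set" where
  "TS lam n D = {p. \<exists>(m::nat) c dd SS. (\<forall>j<m. c j \<in> Pring (length lam) n \<and> c j \<in> Pd (D - dd j) \<and> dd j \<le> D
      \<and> tgen lam n (SS j) (dd j)) \<and> p = (\<Sum>j<m. c j * esym (dd j) (SS j))}"

lemma TS_0[simp]: "0 \<in> TS lam n D"
  unfolding TS_def by (rule CollectI, rule exI[of _ 0]) simp

lemma TS_add:
  assumes "a \<in> TS lam n D" "b \<in> TS lam n D"
  shows "a + b \<in> TS lam n D"
proof -
  obtain m1 :: nat and c1 d1 S1 where 1: "\<forall>j<m1. c1 j \<in> Pring (length lam) n \<and> c1 j \<in> Pd (D - d1 j) \<and> d1 j \<le> D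
      \<and> tgen lam n (S1 j) (d1 j)" "a = (\<Sum>j<m1. c1 j * esym (d1 j) (S1 j))"
    using assms(1) unfolding TS_def by blast
  obtain m2 :: nat and c2 d2 S2 where 2: "\<forall>j<m2. c2 j \<in> Pring (length lam) n \<and> c2 j \<in> Pd (D - d2 j) \<and> d2 j \<le> D
      \<and> tgen lam n (S2 j) (d2 j)" "b = (\<Sum>j<m2. c2 j * esym (d2 j) (S2 j))"
    using assms(2) unfolding TS_def by blast
  define c where "c j = (if j < m1 then c1 j else c2 (j - m1))" for j
  define dd where "dd j = (if j < m1 then d1 j else d2 (j - m1))" for j
  define SS where "SS j = (if j < m1 then S1 j else S2 (j - m1))" for j
  have "a + b = (\<Sum>j<m1+m2. c j * esym (dd j) (SS j))"
    unfolding 1(2) 2(2) sum_concat c_def dd_def SS_def by (rule sum.cong) auto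
  moreover have "\<forall>j<m1+m2. c j \<in> Pring (length lam) n \<and> c j \<in> Pd (D - dd j) \<and> dd j \<le> D
      \<and> tgen lam n (SS j) (dd j)"
  proof (intro allI impI)
    fix j assume j: "j < m1 + m2"
    show "c j \<in> Pring (length lam) n \<and> c j \<in> Pd (D - dd j) \<and> dd j \<le> D \<and> tgen lam n (SS j) (dd j)"
    proof (cases "j < m1")
      case True
      then show ?thesis using 1(1) unfolding c_def dd_def SS_def by simp
    next
      case False
      then have "j - m1 < m2" using j by simp
      then show ?thesis using 2(1) False unfolding c_def dd_def SS_def by simp
    qed
  qed
  ultimately show ?thesis unfolding TS_def by blast
qed

lemma TS_mult:
  assumes "q \<in> Pring (length lam) n" "q \<in> Pd a" "t \<in> TS lam n D"
  shows "q * t \<in> TS lam n (D + a)"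
proof -
  obtain m :: nat and c dd SS where 1: "\<forall>j<m. c j \<in> Pring (length lam) n \<and> c j \<in> Pd (D - dd j) \<and> dd j \<le> D
      \<and> tgen lam n (SS j) (dd j)" "t = (\<Sum>j<m. c j * esym (dd j) (SS j))"
    using assms(3) unfolding TS_def by blast
  have "q * t = (\<Sum>j<m. (q * c j) * esym (dd j) (SS j))"
    unfolding 1(2) by (simp add: sum_distrib_left mult.assoc)
  moreover have "\<forall>j<m. q * c j \<in> Pring (length lam) n \<and> q * c j \<in> Pd (D + a - dd j) \<and> dd j \<le> D + a
      \<and> tgen lam n (SS j) (dd j)"
  proof (intro allI impI conjI)
    fix j assume j: "j < m"
    show "q * c j \<in> Pring (length lam) n" using 1(1) j assms(1) by simp
    have "q * c j \<in> Pd (a + (D - dd j))" using Pd_mult[OF assms(2), of "c j" "D - dd j"] 1(1) j by blast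
    moreover have eq: "a + (D - dd j) = D + a - dd j" using 1(1) j by simp
    ultimately show "q * c j \<in> Pd (D + a - dd j)" by (simp only: eq)
    show "dd j \<le> D + a" using 1(1) j by auto
    show "tgen lam n (SS j) (dd j)" using 1(1) j by auto
  qed
  ultimately show ?thesis unfolding TS_def
    by (intro CollectI exI[of _ m] exI[of _ "\<lambda>j. q * c j"] exI[of _ dd] exI[of _ SS]) simp
qed

lemma TS_mono: "t \<in> TS lam n D \<Longrightarrow> D \<le> D' \<Longrightarrow> t \<in> TS lam n D'"
  using TS_mult[of 1 lam n "D' - D" t D] by simp

lemma TS_gen: "tgen lam n S d \<Longrightarrow> esym d S \<in> TS lam n d"
  unfolding TS_def
  by (rule CollectI, rule exI[of _ 1], rule exI[of _ "\<lambda>_. 1"], rule exI[of _ "\<lambda>_. d"], rule exI[of _ "\<lambda>_. S"]) simp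

lemma TS_uminus: "t \<in> TS lam n D \<Longrightarrow> - t \<in> TS lam n D"
  using TS_mult[of "-1" lam n 0 t D] by simp

lemma TS_diff: "a \<in> TS lam n D \<Longrightarrow> b \<in> TS lam n D \<Longrightarrow> a - b \<in> TS lam n D"
  using TS_add[of a lam n D "-b"] TS_uminus[of b] by simp

lemma TS_sum: "(\<And>i. i \<in> A \<Longrightarrow> f i \<in> TS lam n D) \<Longrightarrow> sum f A \<in> TS lam n D"
  by (induction A rule: infinite_finite_induct) (auto intro: TS_add)

lemma xvar_Pring_n: "1 \<le> n \<Longrightarrow> xvar n \<in> Pring l n" by simp

lemma tele_alg:
  fixes x f g h :: "'a::comm_ring_1"
  shows "(- x) ^ Suc k * f - h = (- x) * ((- x) ^ k * f - g) - (h + x * g)"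
  by (simp add: algebra_simps)

lemma tele:
  assumes n: "1 \<le> n" and S: "finite S" "n \<notin> S"
    and E: "\<And>j. 1 \<le> j \<Longrightarrow> j \<le> k \<Longrightarrow> esym (d + j) (insert n S) \<in> TS lam n (d + j)"
  shows "(- xvar n) ^ k * esym d S - esym (d + k) S \<in> TS lam n (d + k)"
  using E
proof (induction k)
  case 0
  then show ?case by simp
next
  case (Suc k)
  have IH: "(- xvar n) ^ k * esym d S - esym (d + k) S \<in> TS lam n (d + k)"
    using Suc by simp
  have x1: "- xvar n \<in> Pring (length lam) n" "- xvar n \<in> Pd 1" using n by auto
  have A: "(- xvar n) * ((- xvar n) ^ k * esym d S - esym (d + k) S) \<in> TS lam n (d + Suc k)"
    using TS_mult[OF x1 IH] by simp
  have B: "esym (d + Suc k) (insert n S) \<in> TS lam n (d + Suc k)" using Suc.prems[of "Suc k"] by simp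
  have ins: "esym (Suc (d + k)) (insert n S) = esym (Suc (d + k)) S + xvar n * esym (d + k) S"
    by (rule esym_insert[OF S])
  have "(- xvar n) ^ Suc k * esym d S - esym (d + Suc k) S
      = (- xvar n) * ((- xvar n) ^ k * esym d S - esym (d + k) S) - esym (d + Suc k) (insert n S)"
  proof -
    have ins': "esym (d + Suc k) (insert n S) = esym (d + Suc k) S + xvar n * esym (d+k) S"
      using ins by simp
    show ?thesis unfolding ins' by (rule tele_alg)
  qed
  then show ?case using TS_diff[OF A B] by simp
qed

lemma neg_power_trick: "(xvar n) ^ k * q = (-1) ^ k * ((- xvar n) ^ k * q)"
proof -
  have "(-1::mpoly) ^ k * (- xvar n) ^ k = xvar n ^ k"
    by (simp add: power_mult_distrib[symmetric])
  then show ?thesis by (simp add: mult.assoc[symmetric])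
qed

lemma TS_neg_power: "(-xvar n) ^ k * q \<in> TS lam n D \<Longrightarrow> xvar n ^ k * q \<in> TS lam n D"
proof -
  assume a: "(-xvar n) ^ k * q \<in> TS lam n D"
  have "(-1)^k * ((-xvar n)^k * q) \<in> TS lam n (D + 0)"
    by (rule TS_mult[OF Pring_neg1_power Pd_neg1_power a])
  then show ?thesis by (simp only: neg_power_trick[symmetric] add_0_right)
qed

lemma card_S_le:
  assumes "S \<subseteq> {1..m}" shows "card S \<le> m"
  using card_mono[OF _ assms] by simp

lemma xpow_L:
  assumes n: "1 \<le> n" and srt: "srt lam" and sum: "sum_list lam = n"
  shows "xvar n ^ nzrows lam \<in> TS lam n (nzrows lam)"
proof -
  let ?L = "nzrows lam"
  let ?S = "{1..n-1}"
  have L1: "1 \<le> ?L" using nzrows_pos_n[OF srt sum n] .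
  have ins: "insert n ?S = {1..n}" using n by auto
  have E: "esym (0 + j) (insert n ?S) \<in> TS lam n (0 + j)" if "1 \<le> j" "j \<le> ?L" for j
  proof -
    have "tgen lam n {1..n} j"
      unfolding tgen_def using pdual_n[OF sum] n that by simp
    then show ?thesis using TS_gen ins by simp
  qed
  have T: "(- xvar n) ^ ?L * esym 0 ?S - esym (0 + ?L) ?S \<in> TS lam n (0 + ?L)"
    by (rule tele[OF n]) (use E in auto)
  have ES: "esym ?L ?S \<in> TS lam n ?L"
  proof (cases "n = 1")
    case True
    then show ?thesis using esym_big[of ?S ?L] L1 by simp
  next
    case False
    have "pdual lam n (n - 1) + eta lam 1 = n" by (rule pdual_n1[OF sum n])
    then have "tgen lam n ?S ?L"
      unfolding tgen_def using False n nzrows_eta[of lam] by auto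
    then show ?thesis by (rule TS_gen)
  qed
  have "(- xvar n) ^ ?L * esym 0 ?S \<in> TS lam n ?L"
    using TS_add[OF T[simplified] ES] by simp
  then have "(- xvar n) ^ ?L * 1 \<in> TS lam n ?L" using esym_0[of ?S] by simp
  from TS_neg_power[OF this] show ?thesis by simp
qed



lemma split_alg:
  fixes x f g :: "'a::comm_ring_1"
  shows "x ^ k * f = x ^ k * (f + x * g) + x ^ Suc k * (- g)"
  by (simp add: algebra_simps)

lemma xpow_Pring: "1 \<le> n \<Longrightarrow> xvar n ^ k \<in> Pring l n" by simp
lemma xpow_Pd: "xvar n ^ k \<in> Pd k" using Pd_power[OF Pd_xvar, of n k] by simp

lemma key:
  assumes n: "1 \<le> n" and srt: "srt lam" and sum: "sum_list lam = n"
    and k: "k < length lam" and c: "lam ! k = c" "1 \<le> c"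
    and sum': "sum_list lam' + 1 = n"
    and eta': "\<forall>t\<ge>1. eta lam' t + (if t = c then 1 else 0) = eta lam t"
    and g: "tgen lam' (n - 1) S d"
  shows "\<exists>t w. xvar n ^ k * esym d S = t + xvar n ^ Suc k * w \<and> t \<in> TS lam n (d + k)
     \<and> w \<in> Pring (length lam) n \<and> w \<in> Pd (d - 1) \<and> (d = 0 \<longrightarrow> w = 0)"
proof -
  let ?s = "card S"
  let ?P = "pdual lam n" and ?P' = "pdual lam' (n - 1)"
  have S: "S \<subseteq> {1..n-1}" and s1: "1 \<le> ?s" and dg: "int d \<ge> int ?s + 1 - int (?P' ?s)"
    using g unfolding tgen_def by auto
  have finS: "finite S" using S finite_subset by blast
  have nS: "n \<notin> S" using S n by auto
  have "{1..n-1} \<subseteq> {1..n}" by auto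
  then have Sn: "S \<subseteq> {1..n}" using S by blast
  have sle: "?s \<le> n - 1" using card_S_le[OF S] .
  have cle: "c \<le> n" using elem_le_sum_list[OF k] c sum by simp
  have rel: "?P' ?s + (if n - ?s \<le> c then 1 else 0) = ?P (Suc ?s)"
  proof -
    have e1: "{n - 1 - ?s + 1..n - 1} = {n - ?s..n - 1}" using sle s1 by auto
    have a: "?P' ?s = (\<Sum>t\<in>{n - ?s..n - 1}. eta lam' t)" unfolding pdual_def e1 ..
    have b: "eta lam' n = 0" by (rule eta_zero) (use sum' in simp)
    have e2: "{n - ?s..n} = insert n {n - ?s..n - 1}" using sle s1 n by auto
    have c2: "(\<Sum>t\<in>{n - ?s..n}. eta lam' t) = ?P' ?s" unfolding e2 a using b n by simp
    have d: "(\<Sum>t\<in>{n - ?s..n}. eta lam' t + (if t = c then 1 else 0)) = (\<Sum>t\<in>{n - ?s..n}. eta lam t)"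
    proof (rule sum.cong)
      fix t assume "t \<in> {n - ?s..n}"
      then have "1 \<le> t" using sle n by auto
      then show "eta lam' t + (if t = c then 1 else 0) = eta lam t" using eta' by blast
    qed simp
    have e3: "{n - Suc ?s + 1..n} = {n - ?s..n}" using sle n by auto
    have d2: "?P (Suc ?s) = (\<Sum>t\<in>{n - ?s..n}. eta lam t)" unfolding pdual_def e3 ..
    have e: "(\<Sum>t\<in>{n - ?s..n}. (if t = c then 1 else 0::nat)) = (if n - ?s \<le> c then 1 else 0)"
      using cle by (simp add: sum.delta')
    show ?thesis using c2 d d2 e by (simp add: sum.distrib)
  qed
  show ?thesis
  proof (cases "n - ?s \<le> c")
    case True
    then have r: "?P' ?s + 1 = ?P (Suc ?s)" using rel by simp
    have gi: "tgen lam n (insert n S) d"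
      unfolding tgen_def using Sn n s1 dg r finS nS by auto
    have xk: "xvar n ^ k \<in> Pring (length lam) n" "xvar n ^ k \<in> Pd k"
      using n xpow_Pd by auto
    show ?thesis
    proof (cases d)
      case 0
      have "xvar n ^ k * esym 0 (insert n S) \<in> TS lam n (0 + k)"
        by (rule TS_mult[OF xk]) (use TS_gen[OF gi] 0 in simp)
      moreover have "esym 0 (insert n S) = esym 0 S" using finS by (simp add: esym_0)
      ultimately show ?thesis using 0 by (intro exI[of _ "xvar n ^ k * esym 0 (insert n S)"] exI[of _ 0]) simp
    next
      case (Suc d')
      have ins: "esym (Suc d') (insert n S) = esym (Suc d') S + xvar n * esym d' S"
        by (rule esym_insert[OF finS nS])
      have "xvar n ^ k * esym d (insert n S) \<in> TS lam n (d + k)"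
        using TS_mult[OF xk TS_gen[OF gi]] by (simp add: add.commute)
      moreover have "xvar n ^ k * esym d S = xvar n ^ k * esym d (insert n S) + xvar n ^ Suc k * (- esym d' S)"
        unfolding Suc ins by (rule split_alg)
      moreover have "- esym d' S \<in> Pring (length lam) n" using esym_Pring[OF Sn] by simp
      moreover have "- esym d' S \<in> Pd (d - 1)" using esym_Pd[OF finS] Suc by simp
      ultimately show ?thesis using Suc by blast
    qed
  next
    case False
    then have r: "?P' ?s = ?P (Suc ?s)" using rel by simp
    have E: "esym (d + j) (insert n S) \<in> TS lam n (d + j)" if "1 \<le> j" "j \<le> k" for j
    proof (rule TS_gen)
      show "tgen lam n (insert n S) (d + j)"
        unfolding tgen_def using Sn n s1 dg r finS nS that by auto
    qed
    have T: "(- xvar n) ^ k * esym d S - esym (d + k) S \<in> TS lam n (d + k)"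
      by (rule tele[OF n finS nS E])
    have st: "?P (Suc ?s) = eta lam (n - ?s) + ?P ?s" by (rule pdual_step) (use sle n in simp)
    have el: "eta lam (n - ?s) \<le> k" by (rule eta_le_k[OF srt k]) (use False c in simp)
    have "tgen lam n S (d + k)"
      unfolding tgen_def using Sn s1 dg r st el by auto
    then have F: "esym (d + k) S \<in> TS lam n (d + k)" by (rule TS_gen)
    have "(- xvar n) ^ k * esym d S \<in> TS lam n (d + k)"
      using TS_add[OF T F] by simp
    then have "xvar n ^ k * esym d S \<in> TS lam n (d + k)" by (rule TS_neg_power)
    then show ?thesis by (intro exI[of _ "xvar n ^ k * esym d S"] exI[of _ 0]) simp
  qed
qed



definition Span :: "nat \<Rightarrow> nat \<Rightarrow> (nat \<Rightarrow> mpoly) \<Rightarrow> mpoly set" where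
  "Span l M b = {p. \<exists>r. (\<forall>j<M. r j \<in> RT l) \<and> p = (\<Sum>j<M. cst (r j) * b j)}"

definition SpTS :: "nat list \<Rightarrow> nat \<Rightarrow> nat \<Rightarrow> (nat \<Rightarrow> mpoly) \<Rightarrow> nat \<Rightarrow> mpoly set" where
  "SpTS lam n M b D = {s + t | s t. s \<in> Span (length lam) M b \<and> t \<in> TS lam n D}"

lemma Span_0[simp]: "0 \<in> Span l M b"
  unfolding Span_def by (intro CollectI exI[of _ "\<lambda>_. 0"]) simp

lemma Span_add: "p \<in> Span l M b \<Longrightarrow> q \<in> Span l M b \<Longrightarrow> p + q \<in> Span l M b"
proof -
  assume "p \<in> Span l M b" "q \<in> Span l M b"
  then obtain r1 r2 where "\<forall>j<M. r1 j \<in> RT l" "p = (\<Sum>j<M. cst (r1 j) * b j)"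
    "\<forall>j<M. r2 j \<in> RT l" "q = (\<Sum>j<M. cst (r2 j) * b j)" unfolding Span_def by blast
  then show ?thesis unfolding Span_def
    by (intro CollectI exI[of _ "\<lambda>j. r1 j + r2 j"]) (simp add: cst_add sum.distrib distrib_right)
qed

lemma Span_cst: "r \<in> RT l \<Longrightarrow> p \<in> Span l M b \<Longrightarrow> cst r * p \<in> Span l M b"
proof -
  assume r: "r \<in> RT l" and "p \<in> Span l M b"
  then obtain r1 where "\<forall>j<M. r1 j \<in> RT l" "p = (\<Sum>j<M. cst (r1 j) * b j)" unfolding Span_def by blast
  then show ?thesis unfolding Span_def using r
    by (intro CollectI exI[of _ "\<lambda>j. r * r1 j"]) (simp add: cst_mult sum_distrib_left mult.assoc)
qed

lemma SpTS_Span: "s \<in> Span (length lam) M b \<Longrightarrow> s \<in> SpTS lam n M b D"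
  unfolding SpTS_def by (intro CollectI exI[of _ s] exI[of _ 0]) simp

lemma SpTS_TS: "t \<in> TS lam n D \<Longrightarrow> t \<in> SpTS lam n M b D"
  unfolding SpTS_def by (intro CollectI exI[of _ 0] exI[of _ t]) simp

lemma SpTS_0[simp]: "0 \<in> SpTS lam n M b D"
  by (rule SpTS_TS) simp

lemma SpTS_add: "p \<in> SpTS lam n M b D \<Longrightarrow> q \<in> SpTS lam n M b D \<Longrightarrow> p + q \<in> SpTS lam n M b D"
proof -
  assume "p \<in> SpTS lam n M b D" "q \<in> SpTS lam n M b D"
  then obtain s1 t1 s2 t2 where "p = s1 + t1" "q = s2 + t2" "s1 \<in> Span (length lam) M b" "s2 \<in> Span (length lam) M b"
    "t1 \<in> TS lam n D" "t2 \<in> TS lam n D" unfolding SpTS_def by blast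
  moreover have "s1 + t1 + (s2 + t2) = (s1 + s2) + (t1 + t2)" by (simp add: algebra_simps)
  ultimately show ?thesis unfolding SpTS_def using Span_add TS_add by blast
qed

lemma SpTS_cst: "r \<in> RT (length lam) \<Longrightarrow> p \<in> SpTS lam n M b D \<Longrightarrow> cst r * p \<in> SpTS lam n M b D"
proof -
  assume r: "r \<in> RT (length lam)" and "p \<in> SpTS lam n M b D"
  then obtain s t where st: "p = s + t" "s \<in> Span (length lam) M b" "t \<in> TS lam n D" unfolding SpTS_def by blast
  have "cst r * t \<in> TS lam n (D + 0)" by (rule TS_mult) (use r st in auto)
  moreover have "cst r * s \<in> Span (length lam) M b" using Span_cst r st by blast
  moreover have "cst r * p = cst r * s + cst r * t" using st by (simp add: distrib_left)
  ultimately show ?thesis unfolding SpTS_def by auto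
qed

lemma SpTS_sum: "(\<And>i. i \<in> A \<Longrightarrow> f i \<in> SpTS lam n M b D) \<Longrightarrow> sum f A \<in> SpTS lam n M b D"
  by (induction A rule: infinite_finite_induct) (auto intro: SpTS_add)

lemma SpTS_expand:
  assumes mons: "\<And>m. Poly_Mapping.keys m \<subseteq> {1..n} \<Longrightarrow> mdeg m \<le> D \<Longrightarrow> mon m \<in> SpTS lam n M b D"
    and p: "p \<in> Pring (length lam) n" "p \<in> Pd D"
  shows "p \<in> SpTS lam n M b D"
proof -
  have "(\<Sum>m\<in>Poly_Mapping.keys p. cst (Poly_Mapping.lookup p m) * mon m) \<in> SpTS lam n M b D"
  proof (rule SpTS_sum)
    fix m assume m: "m \<in> Poly_Mapping.keys p"
    have "Poly_Mapping.keys m \<subseteq> {1..n}" using p(1) m unfolding Pring_def by blast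
    moreover have "mdeg m \<le> D" using p(2) m unfolding Pd_def by blast
    ultimately have "mon m \<in> SpTS lam n M b D" by (rule mons)
    then show "cst (Poly_Mapping.lookup p m) * mon m \<in> SpTS lam n M b D"
      by (rule SpTS_cst[OF Pring_lookup[OF p(1)]])
  qed
  then show ?thesis using poly_expand[of p] by simp
qed

lemma assemble:
  fixes L :: nat and Ms :: "nat \<Rightarrow> nat" and fam :: "nat \<Rightarrow> nat \<Rightarrow> mpoly"
  assumes "\<And>k i. k < L \<Longrightarrow> i < Ms k \<Longrightarrow> fam k i \<in> X"
  shows "\<exists>b. (\<forall>j < (\<Sum>k<L. Ms k). b j \<in> X) \<and>
     (\<forall>k<L. \<forall>z. (\<forall>i<Ms k. z i \<in> RT l) \<longrightarrow> (\<Sum>i<Ms k. cst (z i) * fam k i) \<in> Span l (\<Sum>k<L. Ms k) b)"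
  using assms
proof (induction L)
  case 0
  then show ?case by (intro exI[of _ "\<lambda>_. 0"]) simp
next
  case (Suc L)
  have pr: "\<And>k i. k < L \<Longrightarrow> i < Ms k \<Longrightarrow> fam k i \<in> X" using Suc.prems by simp
  from Suc.IH[OF pr] obtain b where b: "\<forall>j < (\<Sum>k<L. Ms k). b j \<in> X"
    "\<forall>k<L. \<forall>z. (\<forall>i<Ms k. z i \<in> RT l) \<longrightarrow> (\<Sum>i<Ms k. cst (z i) * fam k i) \<in> Span l (\<Sum>k<L. Ms k) b"
    by blast
  define Off where "Off = (\<Sum>k<L. Ms k)"
  define b' where "b' j = (if j < Off then b j else fam L (j - Off))" for j
  have tot: "(\<Sum>k<Suc L. Ms k) = Off + Ms L" unfolding Off_def by simp
  have gen: "(\<Sum>j<Off + Ms L. cst (if j < Off then r1 j else r2 (j - Off)) * b' j)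
      = (\<Sum>j<Off. cst (r1 j) * b j) + (\<Sum>i<Ms L. cst (r2 i) * fam L i)" for r1 r2
    unfolding sum_concat by (rule sum.cong) (auto simp: b'_def)
  have mem: "\<forall>j < (\<Sum>k<Suc L. Ms k). b' j \<in> X"
  proof (intro allI impI)
    fix j assume j: "j < (\<Sum>k<Suc L. Ms k)"
    show "b' j \<in> X"
    proof (cases "j < Off")
      case True
      then show ?thesis using b(1) unfolding b'_def Off_def by simp
    next
      case False
      then have "j - Off < Ms L" using j tot by simp
      then show ?thesis using Suc.prems[of L "j - Off"] False unfolding b'_def by simp
    qed
  qed
  have sp: "\<forall>k<Suc L. \<forall>z. (\<forall>i<Ms k. z i \<in> RT l) \<longrightarrow> (\<Sum>i<Ms k. cst (z i) * fam k i) \<in> Span l (\<Sum>k<Suc L. Ms k) b'"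
  proof (intro allI impI)
    fix k z assume k: "k < Suc L" and z: "\<forall>i<Ms k. z i \<in> RT l"
    show "(\<Sum>i<Ms k. cst (z i) * fam k i) \<in> Span l (\<Sum>k<Suc L. Ms k) b'"
    proof (cases "k = L")
      case True
      have "(\<Sum>i<Ms k. cst (z i) * fam k i) = (\<Sum>j<Off + Ms L. cst (if j < Off then 0 else z (j - Off)) * b' j)"
        using gen[of "\<lambda>_. 0" z] True by simp
      then show ?thesis unfolding Span_def tot using z True
        by (intro CollectI exI[of _ "\<lambda>j. if j < Off then 0 else z (j - Off)"]) auto
    next
      case False
      then have kL: "k < L" using k by simp
      then have "(\<Sum>i<Ms k. cst (z i) * fam k i) \<in> Span l Off b" using b(2) z unfolding Off_def by blast
      then obtain r where r: "\<forall>j<Off. r j \<in> RT l" "(\<Sum>i<Ms k. cst (z i) * fam k i) = (\<Sum>j<Off. cst (r j) * b j)"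
        unfolding Span_def by blast
      have "(\<Sum>i<Ms k. cst (z i) * fam k i) = (\<Sum>j<Off + Ms L. cst (if j < Off then r j else 0) * b' j)"
        using gen[of r "\<lambda>_. 0"] r(2) by simp
      then show ?thesis unfolding Span_def tot using r(1)
        by (intro CollectI exI[of _ "\<lambda>j. if j < Off then r j else 0"]) auto
    qed
  qed
  show ?case using mem sp by blast
qed



lemma dist_alg:
  fixes c t X w :: "'a::comm_ring_1"
  shows "c * (t + X * w) = c * t + X * (c * w)"
  by (simp add: distrib_left mult.left_commute)

lemma step_mon:
  fixes lams :: "nat \<Rightarrow> nat list" and bs :: "nat \<Rightarrow> nat \<Rightarrow> mpoly" and Ms :: "nat \<Rightarrow> nat"
  assumes n: "1 \<le> n" and srt: "srt lam" and sum: "sum_list lam = n"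
   and lamsP: "\<And>k. k < nzrows lam \<Longrightarrow> length (lams k) = length lam \<and> sum_list (lams k) + 1 = n
         \<and> (\<forall>t\<ge>1. eta (lams k) t + (if t = lam ! k then 1 else 0) = eta lam t)"
   and bsP: "\<And>k D p. k < nzrows lam \<Longrightarrow> p \<in> Pring (length lam) (n - 1) \<Longrightarrow> p \<in> Pd D
         \<Longrightarrow> p \<in> SpTS (lams k) (n - 1) (Ms k) (bs k) D"
   and spanP: "\<And>k z. k < nzrows lam \<Longrightarrow> (\<forall>i<Ms k. z i \<in> RT (length lam))
         \<Longrightarrow> (\<Sum>i<Ms k. cst (z i) * (xvar n ^ k * bs k i)) \<in> Span (length lam) M b"
  shows "Poly_Mapping.keys m \<subseteq> {1..n} \<Longrightarrow> mdeg m \<le> D \<Longrightarrow> mon m \<in> SpTS lam n M b D"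
proof (induction "nzrows lam - Poly_Mapping.lookup m n" arbitrary: m rule: less_induct)
  case (less m)
  let ?L = "nzrows lam"
  let ?l = "length lam"
  define e where "e = Poly_Mapping.lookup m n"
  define m' where "m' = Poly_Mapping.update n 0 m"
  have m_eq: "m = m' + Poly_Mapping.single n e"
    by (rule poly_mapping_eqI) (simp add: m'_def e_def lookup_add lookup_update lookup_single when_def)
  have "Poly_Mapping.keys m' = Poly_Mapping.keys m - {n}" unfolding m'_def by (simp add: keys_update)
  then have keys': "Poly_Mapping.keys m' \<subseteq> {1..n - 1}" using less.prems(1) by auto
  have deg: "mdeg m = mdeg m' + e" using m_eq by (simp add: mdeg_add)
  have monm: "mon m = xvar n ^ e * mon m'"
  proof -
    have "mon m = mon (Poly_Mapping.single n e) * mon m'"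
      by (subst m_eq) (simp add: mon_mult add.commute)
    then show ?thesis by (simp add: xvar_power)
  qed
  have m'P: "mon m' \<in> Pring ?l (n - 1)" "mon m' \<in> Pring ?l n" "mon m' \<in> Pd (mdeg m')"
    using keys' Pring_mono[of "n - 1" n] Pd_mon by auto
  show ?case
  proof (cases "?L \<le> e")
    case True
    have XL: "xvar n ^ ?L \<in> TS lam n ?L" by (rule xpow_L[OF n srt sum])
    let ?q = "xvar n ^ (e - ?L) * mon m'"
    have q: "?q \<in> Pring ?l n" "?q \<in> Pd (e - ?L + mdeg m')"
      using m'P n xpow_Pd[of n "e - ?L"] Pd_mult by auto
    have "?q * xvar n ^ ?L \<in> TS lam n (?L + (e - ?L + mdeg m'))" by (rule TS_mult[OF q XL])
    moreover have "?q * xvar n ^ ?L = mon m"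
      unfolding monm using True by (simp add: power_add[symmetric] mult.commute mult.left_commute)
    moreover have "?L + (e - ?L + mdeg m') \<le> D" using True deg less.prems(2) by simp
    ultimately show ?thesis by (metis TS_mono SpTS_TS)
  next
    case False
    then have eL: "e < ?L" by simp
    note lP = lamsP[OF eL]
    have lsum: "sum_list (lams e) + 1 = n" and leta: "\<forall>t\<ge>1. eta (lams e) t + (if t = lam ! e then 1 else 0) = eta lam t"
      using lP by auto
    have ek: "e < length lam" "1 \<le> lam ! e" using nzrows_pos[OF srt eL] by auto
    have "mon m' \<in> SpTS (lams e) (n - 1) (Ms e) (bs e) (mdeg m')"
      by (rule bsP[OF eL m'P(1) m'P(3)])
    then obtain s t where st: "mon m' = s + t" "s \<in> Span ?l (Ms e) (bs e)" "t \<in> TS (lams e) (n - 1) (mdeg m')"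
      unfolding SpTS_def using lP by auto
    obtain z where z: "\<forall>i<Ms e. z i \<in> RT ?l" "s = (\<Sum>i<Ms e. cst (z i) * bs e i)"
      using st(2) unfolding Span_def by blast
    obtain mm :: nat and c dd SS where cs: "\<forall>j<mm. c j \<in> Pring ?l (n - 1) \<and> c j \<in> Pd (mdeg m' - dd j)
        \<and> dd j \<le> mdeg m' \<and> tgen (lams e) (n - 1) (SS j) (dd j)" "t = (\<Sum>j<mm. c j * esym (dd j) (SS j))"
      using st(3) lP unfolding TS_def by auto
    have split: "mon m = (\<Sum>i<Ms e. cst (z i) * (xvar n ^ e * bs e i))
        + (\<Sum>j<mm. c j * (xvar n ^ e * esym (dd j) (SS j)))"
      unfolding monm st(1) z(2) cs(2) by (simp add: distrib_left sum_distrib_left mult.left_commute)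
    have P1: "(\<Sum>i<Ms e. cst (z i) * (xvar n ^ e * bs e i)) \<in> SpTS lam n M b D"
      by (rule SpTS_Span, rule spanP[OF eL z(1)])
    have shift: "xvar n ^ Suc e * q \<in> SpTS lam n M b D"
      if q: "q \<in> Pring ?l n" "q \<in> Pd E" and E: "E + Suc e \<le> D" for q E
    proof -
      have "xvar n ^ Suc e * q = xvar n ^ Suc e * (\<Sum>m2\<in>Poly_Mapping.keys q. cst (Poly_Mapping.lookup q m2) * mon m2)"
        by (rule arg_cong[OF poly_expand])
      also have "\<dots> = (\<Sum>m2\<in>Poly_Mapping.keys q. cst (Poly_Mapping.lookup q m2)
            * mon (m2 + Poly_Mapping.single n (Suc e)))"
        unfolding sum_distrib_left
      proof (rule sum.cong)
        fix m2
        have "xvar n ^ Suc e * (cst (Poly_Mapping.lookup q m2) * mon m2)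
            = cst (Poly_Mapping.lookup q m2) * (mon (Poly_Mapping.single n (Suc e)) * mon m2)"
          unfolding xvar_power by (rule mult.left_commute)
        also have "\<dots> = cst (Poly_Mapping.lookup q m2) * mon (m2 + Poly_Mapping.single n (Suc e))"
          by (simp only: mon_mult add.commute)
        finally show "xvar n ^ Suc e * (cst (Poly_Mapping.lookup q m2) * mon m2)
            = cst (Poly_Mapping.lookup q m2) * mon (m2 + Poly_Mapping.single n (Suc e))" .
      qed simp
      also have "\<dots> \<in> SpTS lam n M b D"
      proof (rule SpTS_sum)
        fix m2 assume m2: "m2 \<in> Poly_Mapping.keys q"
        let ?m3 = "m2 + Poly_Mapping.single n (Suc e)"
        have k2: "Poly_Mapping.keys m2 \<subseteq> {1..n}" using q(1) m2 unfolding Pring_def by blast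
        have d2: "mdeg m2 \<le> E" using q(2) m2 unfolding Pd_def by blast
        have "Poly_Mapping.keys ?m3 \<subseteq> {1..n}" using k2 n by (auto simp: keys_add_nat)
        moreover have "mdeg ?m3 \<le> D" using d2 E by (simp add: mdeg_add)
        moreover have "nzrows lam - Poly_Mapping.lookup ?m3 n < nzrows lam - Poly_Mapping.lookup m n"
          using eL unfolding e_def by (simp add: lookup_add)
        ultimately have "mon ?m3 \<in> SpTS lam n M b D" using less.hyps by blast
        then show "cst (Poly_Mapping.lookup q m2) * mon ?m3 \<in> SpTS lam n M b D"
          by (rule SpTS_cst[OF Pring_lookup[OF q(1)]])
      qed
      finally show ?thesis .
    qed
    have P2: "(\<Sum>j<mm. c j * (xvar n ^ e * esym (dd j) (SS j))) \<in> SpTS lam n M b D"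
    proof (rule SpTS_sum)
      fix j assume "j \<in> {..<mm}"
      then have cj: "c j \<in> Pring ?l (n - 1)" "c j \<in> Pd (mdeg m' - dd j)" "dd j \<le> mdeg m'"
        "tgen (lams e) (n - 1) (SS j) (dd j)" using cs(1) by auto
      have cjn: "c j \<in> Pring ?l n" using cj(1) Pring_mono[of "n - 1" n] by simp
      obtain tj wj where tw: "xvar n ^ e * esym (dd j) (SS j) = tj + xvar n ^ Suc e * wj"
        "tj \<in> TS lam n (dd j + e)" "wj \<in> Pring ?l n" "wj \<in> Pd (dd j - 1)" "dd j = 0 \<longrightarrow> wj = 0"
        using key[OF n srt sum ek(1) refl ek(2) lsum leta cj(4)] by auto
      have eq: "c j * (xvar n ^ e * esym (dd j) (SS j)) = c j * tj + xvar n ^ Suc e * (c j * wj)"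
        unfolding tw(1) by (rule dist_alg)
      have A: "c j * tj \<in> SpTS lam n M b D"
      proof -
        have "c j * tj \<in> TS lam n (dd j + e + (mdeg m' - dd j))" by (rule TS_mult[OF cjn cj(2) tw(2)])
        moreover have "dd j + e + (mdeg m' - dd j) \<le> D" using cj(3) deg less.prems(2) by simp
        ultimately show ?thesis by (metis TS_mono SpTS_TS)
      qed
      have B: "xvar n ^ Suc e * (c j * wj) \<in> SpTS lam n M b D"
      proof (cases "dd j = 0")
        case True
        then show ?thesis using tw(5) by simp
      next
        case False
        have "c j * wj \<in> Pd (mdeg m' - dd j + (dd j - 1))" by (rule Pd_mult[OF cj(2) tw(4)])
        moreover have "mdeg m' - dd j + (dd j - 1) + Suc e \<le> D" using False cj(3) deg less.prems(2) by simp
        moreover have "c j * wj \<in> Pring ?l n" using cjn tw(3) by simp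
        ultimately show ?thesis using shift by blast
      qed
      show "c j * (xvar n ^ e * esym (dd j) (SS j)) \<in> SpTS lam n M b D"
        unfolding eq by (rule SpTS_add[OF A B])
    qed
    show ?thesis unfolding split by (rule SpTS_add[OF P1 P2])
  qed
qed



lemma Pring_zero_vars:
  assumes "p \<in> Pring l 0"
  shows "p = cst (Poly_Mapping.lookup p 0)"
proof (rule poly_mapping_eqI)
  fix m
  show "Poly_Mapping.lookup p m = Poly_Mapping.lookup (cst (Poly_Mapping.lookup p 0)) m"
  proof (cases "m = 0")
    case True
    then show ?thesis by (simp add: cst_def)
  next
    case False
    have "m \<notin> Poly_Mapping.keys p"
    proof
      assume "m \<in> Poly_Mapping.keys p"
      then have "Poly_Mapping.keys m \<subseteq> {1..0}" using assms unfolding Pring_def by blast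
      then have "Poly_Mapping.keys m = {}" by simp
      then show False using False by simp
    qed
    then show ?thesis using False by (simp add: cst_def in_keys_iff lookup_single)
  qed
qed

theorem tanisaki:
  "srt lam \<Longrightarrow> sum_list lam = n \<Longrightarrow> \<exists>b. (\<forall>j<multinom n lam. b j \<in> Pring (length lam) n) \<and>
     (\<forall>D p. p \<in> Pring (length lam) n \<longrightarrow> p \<in> Pd D \<longrightarrow> p \<in> SpTS lam n (multinom n lam) b D)"
proof (induction n arbitrary: lam)
  case 0
  have z: "\<forall>i<length lam. lam ! i = 0"
  proof (intro allI impI)
    fix i assume "i < length lam"
    then have "lam ! i \<le> sum_list lam" by (rule elem_le_sum_list)
    then show "lam ! i = 0" using "0.prems" by simp
  qed
  have "fprod lam = 1" unfolding fprod_def using z by simp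
  then have M: "multinom 0 lam = 1" using multinom_eq[OF "0.prems"(2)] by simp
  have base: "p \<in> SpTS lam 0 1 (\<lambda>_. 1) D" if p: "p \<in> Pring (length lam) 0" for D p
  proof -
    have e: "(\<Sum>j<(1::nat). cst ((\<lambda>_. Poly_Mapping.lookup p 0) j) * (\<lambda>_. 1) j) = p"
      by (simp add: sym[OF Pring_zero_vars[OF p]])
    have "p \<in> Span (length lam) 1 (\<lambda>_. 1)" unfolding Span_def
      by (rule CollectI, rule exI[of _ "\<lambda>_. Poly_Mapping.lookup p 0"], rule conjI)
         (use Pring_lookup[OF p] e in auto)
    then show ?thesis by (rule SpTS_Span)
  qed
  show ?case unfolding M
  proof (intro exI[of _ "\<lambda>_. 1"] conjI allI impI)
    fix j :: nat assume "j < 1"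
    show "(\<lambda>_. 1) j \<in> Pring (length lam) 0" by simp
  next
    fix D p assume "p \<in> Pring (length lam) 0" "p \<in> Pd D"
    then show "p \<in> SpTS lam 0 1 (\<lambda>_. 1) D" using base by blast
  qed
next
  case (Suc n0)
  let ?n = "Suc n0"
  let ?L = "nzrows lam"
  let ?l = "length lam"
  have n: "1 \<le> ?n" by simp
  have srt: "srt lam" and sum: "sum_list lam = ?n" using Suc.prems by auto
  have "\<forall>k\<in>{..<?L}. \<exists>lam'. length lam' = ?l \<and> srt lam' \<and> sum_list lam' + 1 = sum_list lam
     \<and> (\<forall>t\<ge>1. eta lam' t + (if t = lam ! k then 1 else 0) = eta lam t)
     \<and> fprod lam' * lam ! k = fprod lam"
  proof
    fix k assume "k \<in> {..<?L}"
    then have "0 < lam ! k \<and> k < ?l" using nzrows_pos[OF srt] by simp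
    then have k: "k < ?l" "1 \<le> lam ! k" by auto
    show "\<exists>lam'. length lam' = ?l \<and> srt lam' \<and> sum_list lam' + 1 = sum_list lam
     \<and> (\<forall>t\<ge>1. eta lam' t + (if t = lam ! k then 1 else 0) = eta lam t)
     \<and> fprod lam' * lam ! k = fprod lam"
      by (rule row_dec[OF srt k(1) refl k(2)])
  qed
  from bchoice[OF this] obtain lams where lams: "\<forall>k\<in>{..<?L}. length (lams k) = ?l \<and> srt (lams k) \<and> sum_list (lams k) + 1 = sum_list lam
     \<and> (\<forall>t\<ge>1. eta (lams k) t + (if t = lam ! k then 1 else 0) = eta lam t)
     \<and> fprod (lams k) * lam ! k = fprod lam"
    ..
  define Ms where "Ms k = multinom n0 (lams k)" for k
  have "\<forall>k\<in>{..<?L}. \<exists>b. (\<forall>j<Ms k. b j \<in> Pring ?l n0) \<and>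
     (\<forall>D p. p \<in> Pring ?l n0 \<longrightarrow> p \<in> Pd D \<longrightarrow> p \<in> SpTS (lams k) n0 (Ms k) b D)"
  proof
    fix k assume k: "k \<in> {..<?L}"
    then have "srt (lams k)" "sum_list (lams k) = n0" using lams sum by auto
    from Suc.IH[OF this] show "\<exists>b. (\<forall>j<Ms k. b j \<in> Pring ?l n0) \<and>
     (\<forall>D p. p \<in> Pring ?l n0 \<longrightarrow> p \<in> Pd D \<longrightarrow> p \<in> SpTS (lams k) n0 (Ms k) b D)"
      using lams k unfolding Ms_def by auto
  qed
  from bchoice[OF this] obtain bs where bs: "\<forall>k\<in>{..<?L}. (\<forall>j<Ms k. bs k j \<in> Pring ?l n0) \<and>
     (\<forall>D p. p \<in> Pring ?l n0 \<longrightarrow> p \<in> Pd D \<longrightarrow> p \<in> SpTS (lams k) n0 (Ms k) (bs k) D)"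
    ..
  have fam: "xvar ?n ^ k * bs k i \<in> Pring ?l ?n" if "k < ?L" "i < Ms k" for k i
  proof -
    have "bs k i \<in> Pring ?l n0" using bs that by auto
    then have "bs k i \<in> Pring ?l ?n" using Pring_mono[of n0 ?n] by simp
    then show ?thesis using n by simp
  qed
  obtain b where b: "\<forall>j < (\<Sum>k<?L. Ms k). b j \<in> Pring ?l ?n"
     "\<forall>k<?L. \<forall>z. (\<forall>i<Ms k. z i \<in> RT ?l) \<longrightarrow> (\<Sum>i<Ms k. cst (z i) * (xvar ?n ^ k * bs k i)) \<in> Span ?l (\<Sum>k<?L. Ms k) b"
    using assemble[of ?L Ms "\<lambda>k i. xvar ?n ^ k * bs k i" "Pring ?l ?n" ?l, OF fam] by blast
  have "(\<Sum>k<?L. multinom (?n - 1) (lams k)) = multinom ?n lam"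
    by (rule multinom_pascal[OF sum n srt]) (use lams sum in auto)
  then have Mtot: "(\<Sum>k<?L. Ms k) = multinom ?n lam" unfolding Ms_def by simp
  have "p \<in> SpTS lam ?n (multinom ?n lam) b D" if p: "p \<in> Pring ?l ?n" "p \<in> Pd D" for D p
  proof (rule SpTS_expand[OF _ p])
    fix m assume m: "Poly_Mapping.keys m \<subseteq> {1..?n}" "mdeg m \<le> D"
    show "mon m \<in> SpTS lam ?n (multinom ?n lam) b D"
      unfolding Mtot[symmetric]
    proof (rule step_mon[OF n srt sum, of lams Ms bs, OF _ _ _ m])
      fix k assume "k < ?L"
      then show "length (lams k) = ?l \<and> sum_list (lams k) + 1 = ?n
         \<and> (\<forall>t\<ge>1. eta (lams k) t + (if t = lam ! k then 1 else 0) = eta lam t)"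
        using lams sum by auto
    next
      fix k D p assume "k < ?L" "p \<in> Pring ?l (?n - 1)" "p \<in> Pd D"
      then show "p \<in> SpTS (lams k) (?n - 1) (Ms k) (bs k) D" using bs by auto
    next
      fix k z assume "k < ?L" "\<forall>i<Ms k. z i \<in> RT ?l"
      then show "(\<Sum>i<Ms k. cst (z i) * (xvar ?n ^ k * bs k i)) \<in> Span ?l (\<Sum>k<?L. Ms k) b"
        using b(2) by blast
    qed
  qed
  then show ?case using b(1) unfolding Mtot by blast
qed



lemma ideal_add:
  assumes "a \<in> ideal_gen l n G" "b \<in> ideal_gen l n G"
  shows "a + b \<in> ideal_gen l n G"
proof -
  obtain m1 :: nat and c1 g1 where 1: "\<forall>j<m1. c1 j \<in> Pring l n \<and> g1 j \<in> G" "a = (\<Sum>j<m1. c1 j * g1 j)"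
    using assms(1) unfolding ideal_gen_def by blast
  obtain m2 :: nat and c2 g2 where 2: "\<forall>j<m2. c2 j \<in> Pring l n \<and> g2 j \<in> G" "b = (\<Sum>j<m2. c2 j * g2 j)"
    using assms(2) unfolding ideal_gen_def by blast
  define c where "c j = (if j < m1 then c1 j else c2 (j - m1))" for j
  define g where "g j = (if j < m1 then g1 j else g2 (j - m1))" for j
  have "a + b = (\<Sum>j<m1+m2. c j * g j)"
    unfolding 1(2) 2(2) sum_concat c_def g_def by (rule sum.cong) auto
  moreover have "\<forall>j<m1+m2. c j \<in> Pring l n \<and> g j \<in> G"
  proof (intro allI impI)
    fix j assume j: "j < m1 + m2"
    show "c j \<in> Pring l n \<and> g j \<in> G"
    proof (cases "j < m1")
      case True
      then show ?thesis using 1(1) unfolding c_def g_def by simp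
    next
      case False
      then have "j - m1 < m2" using j by simp
      then show ?thesis using 2(1) False unfolding c_def g_def by simp
    qed
  qed
  ultimately show ?thesis unfolding ideal_gen_def
    by (intro CollectI exI[of _ "m1 + m2"] exI[of _ c] exI[of _ g]) simp
qed

lemma ideal_comb:
  "(\<forall>j<m. c j \<in> Pring l n \<and> g j \<in> G) \<Longrightarrow> (\<Sum>j<(m::nat). c j * g j) \<in> ideal_gen l n G"
  unfolding ideal_gen_def by (intro CollectI exI[of _ m] exI[of _ c] exI[of _ g]) simp

lemma gens_mem: "tgen lam n S d \<Longrightarrow> genpoly lam S (int d) \<in> gens lam n"
  unfolding tgen_def gens_def by blast

lemma genpoly_ok:
  assumes srt: "srt lam" and sum: "sum_list lam = n" and g: "tgen lam n S d"
  shows "genpoly lam S (int d) - esym d S \<in> Pring (length lam) n \<inter> Pd (d - 1)"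
    and "d = 0 \<Longrightarrow> genpoly lam S (int d) - esym d S = 0"
proof -
  have S: "S \<subseteq> {1..n}" and dg: "int d \<ge> int (card S) + 1 - int (pdual lam n (card S))"
    using g unfolding tgen_def by auto
  have pl: "pdual lam n (card S) \<le> n" by (rule pdual_le[OF sum])
  have ys: "y \<in> RT (length lam)"
    if "y \<in> set (map (\<lambda>j. uvar (phi lam j)) [1..<nat (int (card S) + 1 - int d) + 1])" for y
  proof -
    have "\<exists>j \<in> set [1..<nat (int (card S) + 1 - int d) + 1]. y = uvar (phi lam j)"
      using that by (simp only: set_map image_iff)
    then obtain j where j0: "j \<in> set [1..<nat (int (card S) + 1 - int d) + 1]" "y = uvar (phi lam j)"
      by blast
    then have j: "1 \<le> j" "j \<le> nat (int (card S) + 1 - int d)" "y = uvar (phi lam j)" by auto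
    have "j \<le> n" using j(2) dg pl by linarith
    then have "phi lam j \<in> {1..length lam}" using phi_range[OF srt sum j(1)] by simp
    then show ?thesis using j(3) uvar_RT by auto
  qed
  show "genpoly lam S (int d) - esym d S \<in> Pring (length lam) n \<inter> Pd (d - 1)"
    by (rule genpoly_diff(1)[OF S ys])
  show "d = 0 \<Longrightarrow> genpoly lam S (int d) - esym d S = 0"
    by (rule genpoly_diff(2)[OF S ys])
qed

lemma ring_split:
  fixes c e g :: "'a::comm_ring_1"
  shows "c * e = c * g + c * (e - g)"
  by (simp add: algebra_simps)

lemma neg_alg:
  fixes c e g :: "'a::comm_ring_1"
  shows "c * (e - g) = - (c * (g - e))"
  by (simp add: algebra_simps)

lemma grp_alg:
  fixes s a rem R :: "'a::ab_group_add"
  shows "s + (a + rem) - (s + R) = a + (rem - R)"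
  by (simp add: algebra_simps)

lemma deform:
  assumes srt: "srt lam" and sum: "sum_list lam = n"
    and T: "\<And>D p. p \<in> Pring (length lam) n \<Longrightarrow> p \<in> Pd D \<Longrightarrow> p \<in> SpTS lam n M b D"
  shows "p \<in> Pring (length lam) n \<Longrightarrow> p \<in> Pd D \<Longrightarrow> \<exists>r. (\<forall>j<M. r j \<in> RT (length lam)) \<and>
     p - (\<Sum>j<M. cst (r j) * b j) \<in> ideal_gen (length lam) n (gens lam n)"
proof (induction D arbitrary: p)
  case (0 p)
  let ?l = "length lam"
  have "p \<in> SpTS lam n M b 0" by (rule T[OF 0])
  then obtain s t where st: "p = s + t" "s \<in> Span ?l M b" "t \<in> TS lam n 0" unfolding SpTS_def by blast
  obtain z where z: "\<forall>j<M. z j \<in> RT ?l" "s = (\<Sum>j<M. cst (z j) * b j)"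
    using st(2) unfolding Span_def by blast
  obtain mm :: nat and c dd SS where cs: "\<forall>j<mm. c j \<in> Pring ?l n \<and> c j \<in> Pd (0 - dd j)
      \<and> dd j \<le> 0 \<and> tgen lam n (SS j) (dd j)" "t = (\<Sum>j<mm. c j * esym (dd j) (SS j))"
    using st(3) unfolding TS_def by blast
  have "t = (\<Sum>j<mm. c j * genpoly lam (SS j) (int (dd j)))"
    unfolding cs(2)
  proof (rule sum.cong)
    fix j assume "j \<in> {..<mm}"
    then have "dd j = 0" "tgen lam n (SS j) (dd j)" using cs(1) by auto
    then have "genpoly lam (SS j) (int (dd j)) - esym (dd j) (SS j) = 0" using genpoly_ok(2)[OF srt sum] by blast
    then show "c j * esym (dd j) (SS j) = c j * genpoly lam (SS j) (int (dd j))" by simp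
  qed simp
  moreover have "(\<Sum>j<mm. c j * genpoly lam (SS j) (int (dd j))) \<in> ideal_gen ?l n (gens lam n)"
  proof (rule ideal_comb, intro allI impI)
    fix j assume "j < mm"
    then have "c j \<in> Pring ?l n" "tgen lam n (SS j) (dd j)" using cs(1) by auto
    then show "c j \<in> Pring ?l n \<and> genpoly lam (SS j) (int (dd j)) \<in> gens lam n" using gens_mem by simp
  qed
  moreover have "p - (\<Sum>j<M. cst (z j) * b j) = t" using st(1) z(2) by simp
  ultimately have "p - (\<Sum>j<M. cst (z j) * b j) \<in> ideal_gen ?l n (gens lam n)" by simp
  then show ?case using z(1) by (intro exI[of _ z] conjI)
next
  case (Suc D p)
  let ?l = "length lam"
  have "p \<in> SpTS lam n M b (Suc D)" by (rule T[OF Suc.prems])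
  then obtain s t where st: "p = s + t" "s \<in> Span ?l M b" "t \<in> TS lam n (Suc D)" unfolding SpTS_def by blast
  obtain z where z: "\<forall>j<M. z j \<in> RT ?l" "s = (\<Sum>j<M. cst (z j) * b j)"
    using st(2) unfolding Span_def by blast
  obtain mm :: nat and c dd SS where cs: "\<forall>j<mm. c j \<in> Pring ?l n \<and> c j \<in> Pd (Suc D - dd j)
      \<and> dd j \<le> Suc D \<and> tgen lam n (SS j) (dd j)" "t = (\<Sum>j<mm. c j * esym (dd j) (SS j))"
    using st(3) unfolding TS_def by blast
  define g where "g j = genpoly lam (SS j) (int (dd j))" for j
  define rem where "rem = (\<Sum>j<mm. c j * (esym (dd j) (SS j) - g j))"
  have tsplit: "t = (\<Sum>j<mm. c j * g j) + rem"
    unfolding cs(2) rem_def sum.distrib[symmetric] by (rule sum.cong) (simp_all only: ring_split)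
  have I1: "(\<Sum>j<mm. c j * g j) \<in> ideal_gen ?l n (gens lam n)"
  proof (rule ideal_comb, intro allI impI)
    fix j assume "j < mm"
    then have "c j \<in> Pring ?l n" "tgen lam n (SS j) (dd j)" using cs(1) by auto
    then show "c j \<in> Pring ?l n \<and> g j \<in> gens lam n" unfolding g_def using gens_mem by simp
  qed
  have remP: "rem \<in> Pring ?l n" "rem \<in> Pd D"
  proof -
    have "c j * (esym (dd j) (SS j) - g j) \<in> Pring ?l n \<inter> Pd D" if j: "j < mm" for j
    proof -
      have cj: "c j \<in> Pring ?l n" "c j \<in> Pd (Suc D - dd j)" "dd j \<le> Suc D" "tgen lam n (SS j) (dd j)"
        using cs(1) j by auto
      have gd: "g j - esym (dd j) (SS j) \<in> Pring ?l n \<inter> Pd (dd j - 1)"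
        unfolding g_def by (rule genpoly_ok(1)[OF srt sum cj(4)])
      have neg: "c j * (esym (dd j) (SS j) - g j) = - (c j * (g j - esym (dd j) (SS j)))"
        by (rule neg_alg)
      have pr: "c j * (g j - esym (dd j) (SS j)) \<in> Pring ?l n" using cj(1) gd by simp
      show ?thesis
      proof (cases "dd j = 0")
        case True
        then have "g j - esym (dd j) (SS j) = 0" unfolding g_def using genpoly_ok(2)[OF srt sum cj(4)] by blast
        then have "c j * (esym (dd j) (SS j) - g j) = 0" unfolding neg by (simp only: mult_zero_right minus_zero)
        then show ?thesis by (simp only: Int_iff Pring_0 Pd_0 conj_absorb)
      next
        case False
        have "c j * (g j - esym (dd j) (SS j)) \<in> Pd (Suc D - dd j + (dd j - 1))"
          using Pd_mult[OF cj(2)] gd by blast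
        moreover have "Suc D - dd j + (dd j - 1) = D" using False cj(3) by simp
        ultimately have pd: "c j * (g j - esym (dd j) (SS j)) \<in> Pd D" by simp
        show ?thesis unfolding neg using pr pd by simp
      qed
    qed
    then show "rem \<in> Pring ?l n" "rem \<in> Pd D" unfolding rem_def by (auto intro!: Pring_sum Pd_sum)
  qed
  obtain r' where r': "\<forall>j<M. r' j \<in> RT ?l" "rem - (\<Sum>j<M. cst (r' j) * b j) \<in> ideal_gen ?l n (gens lam n)"
    using Suc.IH[OF remP] by blast
  have sumz: "(\<Sum>j<M. cst (z j + r' j) * b j) = s + (\<Sum>j<M. cst (r' j) * b j)"
    unfolding z(2) by (simp add: cst_add distrib_right sum.distrib)
  have eq: "p - (\<Sum>j<M. cst (z j + r' j) * b j)
      = (\<Sum>j<mm. c j * g j) + (rem - (\<Sum>j<M. cst (r' j) * b j))"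
    unfolding sumz st(1) tsplit by (rule grp_alg)
  have "p - (\<Sum>j<M. cst (z j + r' j) * b j) \<in> ideal_gen ?l n (gens lam n)"
    unfolding eq by (rule ideal_add[OF I1 r'(2)])
  moreover have "\<forall>j<M. z j + r' j \<in> RT ?l" using z(1) r'(1) by simp
  ultimately show ?case by (intro exI[of _ "\<lambda>j. z j + r' j"] conjI)
qed

theorem lemma5p11:
  fixes n :: nat and lam :: "nat list"
  assumes "1 \<le> n" and "is_partition lam n"
  shows "\<exists>b :: nat \<Rightarrow> mpoly.
           (\<forall>j < multinom n lam. b j \<in> Pring (length lam) n) \<and>
           (\<forall>p \<in> Pring (length lam) n. \<exists>r :: nat \<Rightarrow> laur.
               (\<forall>j < multinom n lam. r j \<in> RT (length lam)) \<and>
               p - (\<Sum>j < multinom n lam. cst (r j) * b j)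
                 \<in> ideal_gen (length lam) n (gens lam n))"
proof -
  have srt: "srt lam" and sum: "sum_list lam = n" using assms(2) unfolding is_partition_def by auto
  obtain b where b: "\<forall>j<multinom n lam. b j \<in> Pring (length lam) n"
    "\<forall>D p. p \<in> Pring (length lam) n \<longrightarrow> p \<in> Pd D \<longrightarrow> p \<in> SpTS lam n (multinom n lam) b D"
    using tanisaki[OF srt sum] by blast
  have "\<exists>r. (\<forall>j < multinom n lam. r j \<in> RT (length lam)) \<and>
               p - (\<Sum>j < multinom n lam. cst (r j) * b j) \<in> ideal_gen (length lam) n (gens lam n)"
    if p: "p \<in> Pring (length lam) n" for p
  proof -
    let ?D = "Max (insert 0 (mdeg ` Poly_Mapping.keys p))"
    have "p \<in> Pd ?D" unfolding Pd_def mem_Collect_eq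
    proof
      fix m assume "m \<in> Poly_Mapping.keys p"
      then have "mdeg m \<in> insert 0 (mdeg ` Poly_Mapping.keys p)" by simp
      then show "mdeg m \<le> ?D" by (rule Max_ge[rotated]) simp
    qed
    show ?thesis by (rule deform[OF srt sum _ p \<open>p \<in> Pd ?D\<close>]) (use b(2) in blast)
  qed
  then show ?thesis using b(1) by (intro exI[of _ b] conjI ballI) auto
qed


end
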